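(* Let $\lambda\in(0,1)$ and $T\ge1$. Then $$\|V_\lambda-V_{\lambda,T}\|_{\sup}=\|\tilde V^1_\lambda-\tilde V^1_{\lambda,T}\|_{\sup}=\|\tilde V^2_\lambda-\tilde V^2_{\lambda,T}\|_{\sup}.$$
   Context: Setting: nonempty finite type sets $K,L$, action sets $A,B$, payoff $M:K\times L\times A\times B\to\mathbb R$. Discounted game $\Gamma_\lambda(p,q)$ ($p\in\Delta(K)$, $q\in\Delta(L)$): $k\sim p$, $l\sim q$ drawn independently and told privately to players 1, 2; infinitely many stages of simultaneous, publicly announced actions; strategies depend on own type and both histories; payoff to player 1 (maximizer) $\mathbb E[\sum_{t\ge1}\lambda(1-\lambda)^{t-1}M(k,l,a_t,b_t)]$, value $V_\lambda(p,q)$. $\Gamma_{\lambda,T}(p,q)$: same with the sum over $t\le T$, value $V_{\lambda,T}(p,q)$. Dual games $\tilde\Gamma^1_\lambda(\mu,q)$ ($\mu\in\mathbb R^{|K|}$): player 1 chooses his type $k$ himself, $l\sim q$ by nature, payoff $\mathbb E[\mu^k+\sum_{t\ge1}\lambda(1-\lambda)^{t-1}M]$, value $\tilde V^1_\lambda(\mu,q)$; $\tilde\Gamma^2_\lambda(p,\nu)$ ($\nu\in\mathbb R^{|L|}$): $k\sim p$ by nature, player 2 chooses $l$ himself, payoff $\mathbb E[\nu^l+\sum_{t\ge1}\lambda(1-\lambda)^{t-1}M]$, value $\tilde V^2_\lambda(p,\nu)$. $\tilde V^1_{\lambda,T},\tilde V^2_{\lambda,T}$ are the values of the same dual games with sums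 truncated at $T$. $\|f\|_{\sup}$ is the supremum of $|f|$ over its domain ($\Delta(K)\times\Delta(L)$, $\mathbb R^{|K|}\times\Delta(L)$, $\Delta(K)\times\mathbb R^{|L|}$ respectively). *)

theory Defs
  imports "HOL-Probability.Probability"
begin

text \<open>Types: 'k (player 1's types K), 'l (player 2's types L), 'a, 'b (action sets). Strategies are behaviour strategies:
  player 1 uses his own type and the public history, player 2 likewise.\<close>

type_synonym ('k,'a,'b) strat1 = "'k \<Rightarrow> ('a \<times> 'b) list \<Rightarrow> 'a pmf"
type_synonym ('l,'a,'b) strat2 = "'l \<Rightarrow> ('a \<times> 'b) list \<Rightarrow> 'b pmf"

fun hist_dist :: "('k,'a,'b) strat1 \<Rightarrow> ('l,'a,'b) strat2 \<Rightarrow> 'k \<Rightarrow> 'l \<Rightarrow> nat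
    \<Rightarrow> ('a \<times> 'b) list pmf" where
  "hist_dist \<sigma> \<tau> k l 0 = return_pmf []"
| "hist_dist \<sigma> \<tau> k l (Suc n) =
     bind_pmf (hist_dist \<sigma> \<tau> k l n) (\<lambda>h.
     bind_pmf (\<sigma> k h) (\<lambda>a.
     bind_pmf (\<tau> l h) (\<lambda>b. return_pmf (h @ [(a, b)]))))"

text \<open>Expected payoff of stage n+1 (stages are indexed from 0 here), with
  k \<sim> p, l \<sim> q independent.\<close>
definition stage_pay ::
  "('k \<Rightarrow> 'l \<Rightarrow> 'a \<Rightarrow> 'b \<Rightarrow> real) \<Rightarrow> 'k pmf \<Rightarrow> 'l pmf
   \<Rightarrow> ('k,'a,'b) strat1 \<Rightarrow> ('l,'a,'b) strat2 \<Rightarrow> nat \<Rightarrow> real" where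
  "stage_pay M p q \<sigma> \<tau> n =
     measure_pmf.expectation (pair_pmf p q) (\<lambda>(k, l).
       measure_pmf.expectation (hist_dist \<sigma> \<tau> k l n) (\<lambda>h.
         measure_pmf.expectation (\<sigma> k h) (\<lambda>a.
           measure_pmf.expectation (\<tau> l h) (\<lambda>b. M k l a b))))"

text \<open>Discounted payoff E[sum_{t>=1} lam (1-lam)^(t-1) M]; since M is bounded this
  equals the series of the expected stage payoffs.\<close>
definition disc_pay ::
  "('k \<Rightarrow> 'l \<Rightarrow> 'a \<Rightarrow> 'b \<Rightarrow> real) \<Rightarrow> real \<Rightarrow> 'k pmf \<Rightarrow> 'l pmf
   \<Rightarrow> ('k,'a,'b) strat1 \<Rightarrow> ('l,'a,'b) strat2 \<Rightarrow> real" where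
  "disc_pay M lam p q \<sigma> \<tau> = (\<Sum>n. lam * (1 - lam) ^ n * stage_pay M p q \<sigma> \<tau> n)"

definition trunc_pay ::
  "('k \<Rightarrow> 'l \<Rightarrow> 'a \<Rightarrow> 'b \<Rightarrow> real) \<Rightarrow> real \<Rightarrow> nat \<Rightarrow> 'k pmf \<Rightarrow> 'l pmf
   \<Rightarrow> ('k,'a,'b) strat1 \<Rightarrow> ('l,'a,'b) strat2 \<Rightarrow> real" where
  "trunc_pay M lam T p q \<sigma> \<tau> = (\<Sum>n<T. lam * (1 - lam) ^ n * stage_pay M p q \<sigma> \<tau> n)"

text \<open>Values (player 1 maximises). These games have a value, so the value equals
  the max-min (sup-inf) value used here.\<close>
definition game_val ::
  "('k pmf \<Rightarrow> 'l pmf \<Rightarrow> ('k,'a,'b) strat1 \<Rightarrow> ('l,'a,'b) strat2 \<Rightarrow> real)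
   \<Rightarrow> 'k pmf \<Rightarrow> 'l pmf \<Rightarrow> real" where
  "game_val G p q = (SUP \<sigma>. INF \<tau>. G p q \<sigma> \<tau>)"

text \<open>Dual game 1: player 1 picks his type himself (with a lottery x over K),
  l \<sim> q; payoff E[mu^k + G].\<close>
definition dual_val1 ::
  "('k pmf \<Rightarrow> 'l pmf \<Rightarrow> ('k,'a,'b) strat1 \<Rightarrow> ('l,'a,'b) strat2 \<Rightarrow> real)
   \<Rightarrow> ('k \<Rightarrow> real) \<Rightarrow> 'l pmf \<Rightarrow> real" where
  "dual_val1 G \<mu> q = (SUP (x, \<sigma>). INF \<tau>.
      measure_pmf.expectation x \<mu> + G x q \<sigma> \<tau>)"

text \<open>Dual game 2: k \<sim> p, player 2 picks his type himself (with a lottery y over L);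
  payoff E[nu^l + G].\<close>
definition dual_val2 ::
  "('k pmf \<Rightarrow> 'l pmf \<Rightarrow> ('k,'a,'b) strat1 \<Rightarrow> ('l,'a,'b) strat2 \<Rightarrow> real)
   \<Rightarrow> 'k pmf \<Rightarrow> ('l \<Rightarrow> real) \<Rightarrow> real" where
  "dual_val2 G p \<nu> = (SUP \<sigma>. INF (y, \<tau>).
      measure_pmf.expectation y \<nu> + G p y \<sigma> \<tau>)"

end

theory Submission
  imports Defs "HOL-Analysis.Analysis"
begin

lemma exp_bind_pmf:
  fixes f :: "'b \<Rightarrow> real"
  assumes "\<And>x. \<bar>f x\<bar> \<le> B"
  shows "measure_pmf.expectation (bind_pmf M N) f = measure_pmf.expectation M (\<lambda>x. measure_pmf.expectation (N x) f)"
  unfolding measure_pmf_bind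
  apply (rule integral_bind[where K="count_space UNIV" and B=B and B'=1])
  using assms apply (auto intro: measure_pmf.finite_measure simp: measure_pmf_in_subprob_algebra)
  done

lemma exp_abs_le:
  fixes f :: "'b \<Rightarrow> real"
  assumes "\<And>x. \<bar>f x\<bar> \<le> c"
  shows "\<bar>measure_pmf.expectation M f\<bar> \<le> c"
proof -
  have int: "integrable (measure_pmf M) f"
    by (rule measure_pmf.integrable_const_bound[where B=c]) (use assms in auto)
  have "measure_pmf.expectation M f \<le> c"
    by (rule measure_pmf.integral_le_const[OF int]) (use assms abs_le_D1 in auto)
  moreover have "-c \<le> measure_pmf.expectation M f"
    by (rule measure_pmf.integral_ge_const[OF int]) (use assms in \<open>auto simp: abs_le_iff intro!: AE_I2 \<close>, smt (verit) assms abs_le_iff)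
  ultimately show ?thesis by auto
qed

definition P1 :: "('k,'a,'b) strat1 \<Rightarrow> 'k \<Rightarrow> ('a \<times> 'b) list \<Rightarrow> real" where
  "P1 \<sigma> k h = (\<Prod>i<length h. pmf (\<sigma> k (take i h)) (fst (h!i)))"
definition P2 :: "('l,'a,'b) strat2 \<Rightarrow> 'l \<Rightarrow> ('a \<times> 'b) list \<Rightarrow> real" where
  "P2 \<tau> l h = (\<Prod>i<length h. pmf (\<tau> l (take i h)) (snd (h!i)))"

lemma P1_snoc: "P1 \<sigma> k (h @ [x]) = P1 \<sigma> k h * pmf (\<sigma> k h) (fst x)"
proof -
  have "(\<Prod>i<length h. pmf (\<sigma> k (take i (h@[x]))) (fst ((h@[x])!i))) = P1 \<sigma> k h"
    unfolding P1_def by (rule prod.cong) (auto simp: nth_append)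
  then show ?thesis unfolding P1_def by (simp add: nth_append)
qed

lemma P2_snoc: "P2 \<tau> l (h @ [x]) = P2 \<tau> l h * pmf (\<tau> l h) (snd x)"
proof -
  have "(\<Prod>i<length h. pmf (\<tau> l (take i (h@[x]))) (snd ((h@[x])!i))) = P2 \<tau> l h"
    unfolding P2_def by (rule prod.cong) (auto simp: nth_append)
  then show ?thesis unfolding P2_def by (simp add: nth_append)
qed

lemma P1_nonneg: "0 \<le> P1 \<sigma> k h" unfolding P1_def by (simp add: prod_nonneg)

lemma step_map: "bind_pmf (\<sigma> k h) (\<lambda>a. bind_pmf (\<tau> l h) (\<lambda>b. return_pmf (h @ [(a, b)])))
   = map_pmf (\<lambda>ab. h @ [ab]) (pair_pmf (\<sigma> k h) (\<tau> l h))"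
  by (simp add: pair_pmf_def map_bind_pmf)

lemma pmf_step: "pmf (map_pmf (\<lambda>ab. x @ [ab]) (pair_pmf A B)) h =
   (if h \<noteq> [] \<and> butlast h = x then pmf A (fst (last h)) * pmf B (snd (last h)) else 0)"
proof (cases "h \<noteq> [] \<and> butlast h = x")
  case True
  then have h: "h = x @ [last h]" by (metis append_butlast_last_id)
  have inj: "inj (\<lambda>ab. x @ [ab])" by (auto simp: inj_def)
  have "pmf (map_pmf (\<lambda>ab. x @ [ab]) (pair_pmf A B)) (x @ [last h]) = pmf (pair_pmf A B) (last h)"
    by (rule pmf_map_inj'[OF inj])
  then show ?thesis using True h by (metis pmf_pair prod.collapse)
next
  case False
  then show ?thesis by (intro trans[OF pmf_map_outside]) auto
qed

lemma pmf_hist: "pmf (hist_dist \<sigma> \<tau> k l n) h = (if length h = n then P1 \<sigma> k h * P2 \<tau> l h else 0)"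
proof (induction n arbitrary: h)
  case 0
  then show ?case by (auto simp: P1_def P2_def)
next
  case (Suc n)
  let ?c = "\<lambda>x. pmf (\<sigma> k x) (fst (last h)) * pmf (\<tau> l x) (snd (last h))"
  have "pmf (hist_dist \<sigma> \<tau> k l (Suc n)) h
     = measure_pmf.expectation (hist_dist \<sigma> \<tau> k l n) (\<lambda>x. if h \<noteq> [] \<and> butlast h = x then ?c x else 0)"
    by (simp add: pmf_bind step_map pmf_step)
  also have "\<dots> = (if h \<noteq> [] then ?c (butlast h) * pmf (hist_dist \<sigma> \<tau> k l n) (butlast h) else 0)"
  proof (cases "h = []")
    case True then show ?thesis by simp
  next
    case False
    then show ?thesis
      by (subst integral_measure_pmf_real[where A="{butlast h}"]) (auto split: if_splits)
  qed
  also have "\<dots> = (if length h = Suc n then P1 \<sigma> k h * P2 \<tau> l h else 0)"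
  proof (cases "h = []")
    case True then show ?thesis by simp
  next
    case False
    then have h: "h = butlast h @ [last h]" by simp
    have "P1 \<sigma> k h * P2 \<tau> l h = P1 \<sigma> k (butlast h) * P2 \<tau> l (butlast h) * ?c (butlast h)"
      by (subst h, subst h, simp only: P1_snoc P2_snoc) simp
    then show ?thesis using False Suc.IH[of "butlast h"] by auto
  qed
  finally show ?case .
qed

definition mixs :: "('k \<Rightarrow> real) \<Rightarrow> ('k,'a,'b) strat1 \<Rightarrow> ('k,'a,'b) strat1 \<Rightarrow> ('k,'a,'b) strat1" where
  "mixs \<alpha> \<sigma>1 \<sigma>2 k h = (if \<alpha> k * P1 \<sigma>1 k h + (1 - \<alpha> k) * P1 \<sigma>2 k h = 0 then \<sigma>1 k h
     else bind_pmf (bernoulli_pmf (\<alpha> k * P1 \<sigma>1 k h / (\<alpha> k * P1 \<sigma>1 k h + (1 - \<alpha> k) * P1 \<sigma>2 k h)))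
            (\<lambda>b. if b then \<sigma>1 k h else \<sigma>2 k h))"

lemma P1_mix:
  assumes "0 \<le> \<alpha> k" "\<alpha> k \<le> 1"
  shows "P1 (mixs \<alpha> \<sigma>1 \<sigma>2) k h = \<alpha> k * P1 \<sigma>1 k h + (1 - \<alpha> k) * P1 \<sigma>2 k h"
proof (induction h rule: rev_induct)
  case Nil
  then show ?case by (simp add: P1_def)
next
  case (snoc x h)
  define A where "A = \<alpha> k * P1 \<sigma>1 k h"
  define B where "B = (1 - \<alpha> k) * P1 \<sigma>2 k h"
  have A0: "0 \<le> A" unfolding A_def using assms by (simp add: P1_nonneg)
  have B0: "0 \<le> B" unfolding B_def using assms by (simp add: P1_nonneg)
  show ?case
  proof (cases "A + B = 0")
    case True
    then have a: "\<alpha> k * P1 \<sigma>1 k h = 0" "(1 - \<alpha> k) * P1 \<sigma>2 k h = 0" using A0 B0 True unfolding A_def B_def by linarith+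
    then have "P1 (mixs \<alpha> \<sigma>1 \<sigma>2) k h = 0" using snoc by (simp only: a add_0)
    then show ?thesis unfolding P1_snoc using a
      by (metis (no_types, lifting) add.right_neutral mult.assoc mult_zero_left)
  next
    case False
    then have pos: "0 < A + B" using A0 B0 by auto
    have b0: "0 \<le> A / (A + B)" "A / (A + B) \<le> 1" using A0 B0 pos by auto
    have "pmf (mixs \<alpha> \<sigma>1 \<sigma>2 k h) (fst x) =
        A / (A + B) * pmf (\<sigma>1 k h) (fst x) + (1 - A / (A + B)) * pmf (\<sigma>2 k h) (fst x)"
      using False b0 unfolding mixs_def A_def[symmetric] B_def[symmetric]
      by (simp add: pmf_bind)
    moreover have "1 - A / (A + B) = B / (A + B)" using pos by (simp add: field_simps)
    ultimately have "pmf (mixs \<alpha> \<sigma>1 \<sigma>2 k h) (fst x) =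
        (A * pmf (\<sigma>1 k h) (fst x) + B * pmf (\<sigma>2 k h) (fst x)) / (A + B)"
      by (simp add: add_divide_distrib)
    moreover have "P1 (mixs \<alpha> \<sigma>1 \<sigma>2) k h = A + B" using snoc unfolding A_def B_def by simp
    ultimately have "P1 (mixs \<alpha> \<sigma>1 \<sigma>2) k (h @ [x]) = A * pmf (\<sigma>1 k h) (fst x) + B * pmf (\<sigma>2 k h) (fst x)"
      unfolding P1_snoc using pos by simp
    then show ?thesis unfolding P1_snoc A_def B_def by simp
  qed
qed

lemma hist_mix:
  assumes "0 \<le> \<alpha> k" "\<alpha> k \<le> 1"
  shows "hist_dist (mixs \<alpha> \<sigma>1 \<sigma>2) \<tau> k l n =
    bind_pmf (bernoulli_pmf (\<alpha> k)) (\<lambda>b. if b then hist_dist \<sigma>1 \<tau> k l n else hist_dist \<sigma>2 \<tau> k l n)"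
  by (rule pmf_eqI) (simp add: pmf_bind pmf_hist P1_mix[of \<alpha> k, OF assms] assms algebra_simps)

definition spay where
  "spay M \<sigma> \<tau> k l n = stage_pay M (return_pmf k) (return_pmf l) \<sigma> \<tau> n"

definition mB :: "('k::finite \<Rightarrow> 'l::finite \<Rightarrow> 'a::finite \<Rightarrow> 'b::finite \<Rightarrow> real) \<Rightarrow> real" where
  "mB M = Max (range (\<lambda>(k,l,a,b). \<bar>M k l a b\<bar>))"

context
  fixes M :: "'k::finite \<Rightarrow> 'l::finite \<Rightarrow> 'a::finite \<Rightarrow> 'b::finite \<Rightarrow> real"
begin

lemma M_le: "\<bar>M k l a b\<bar> \<le> mB M"
  unfolding mB_def by (rule Max_ge) (auto intro!: image_eqI[where x="(k,l,a,b)"])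

lemma spay_eq: "spay M \<sigma> \<tau> k l n =
  measure_pmf.expectation (hist_dist \<sigma> \<tau> k l n) (\<lambda>h.
         measure_pmf.expectation (\<sigma> k h) (\<lambda>a.
           measure_pmf.expectation (\<tau> l h) (\<lambda>b. M k l a b)))"
  by (simp add: spay_def stage_pay_def)

lemma spay_last: "spay M \<sigma> \<tau> k l n =
  measure_pmf.expectation (hist_dist \<sigma> \<tau> k l (Suc n)) (\<lambda>h. M k l (fst (last h)) (snd (last h)))"
proof -
  have b: "\<And>h. \<bar>M k l (fst (last h)) (snd (last h))\<bar> \<le> mB M" by (rule M_le)
  show ?thesis
    unfolding spay_eq hist_dist.simps
    apply (subst exp_bind_pmf[OF b])
    apply (rule Bochner_Integration.integral_cong[OF refl])
    apply (subst exp_bind_pmf[OF b])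
    apply (rule Bochner_Integration.integral_cong[OF refl])
    apply (subst exp_bind_pmf[OF b])
    apply simp
    done
qed

lemma spay_bound: "\<bar>spay M \<sigma> \<tau> k l n\<bar> \<le> mB M"
  unfolding spay_eq by (intro exp_abs_le M_le)

lemma spay_mix:
  assumes "0 \<le> \<alpha> k" "\<alpha> k \<le> 1"
  shows "spay M (mixs \<alpha> \<sigma>1 \<sigma>2) \<tau> k l n = \<alpha> k * spay M \<sigma>1 \<tau> k l n + (1 - \<alpha> k) * spay M \<sigma>2 \<tau> k l n"
  unfolding spay_last hist_mix[of \<alpha> k, OF assms]
  by (subst exp_bind_pmf[OF M_le]) (simp add: assms)

lemma hist_local: "\<sigma> k = \<sigma>' k \<Longrightarrow> \<tau> l = \<tau>' l \<Longrightarrow> hist_dist \<sigma> \<tau> k l n = hist_dist \<sigma>' \<tau>' k l n"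
  by (induction n) auto

lemma spay_local: "\<sigma> k = \<sigma>' k \<Longrightarrow> \<tau> l = \<tau>' l \<Longrightarrow> spay M \<sigma> \<tau> k l n = spay M \<sigma>' \<tau>' k l n"
  unfolding spay_eq using hist_local[of \<sigma> k \<sigma>' \<tau> l \<tau>' n] by simp

lemma stage_lin: "stage_pay M p q \<sigma> \<tau> n = (\<Sum>k\<in>UNIV. \<Sum>l\<in>UNIV. pmf p k * pmf q l * spay M \<sigma> \<tau> k l n)"
proof -
  have "stage_pay M p q \<sigma> \<tau> n = (\<Sum>x\<in>UNIV. (case x of (k, l) \<Rightarrow> spay M \<sigma> \<tau> k l n) * pmf (pair_pmf p q) x)"
    unfolding stage_pay_def spay_eq
    by (subst integral_measure_pmf_real[where A=UNIV]) (auto simp: case_prod_beta)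
  also have "\<dots> = (\<Sum>x\<in>UNIV \<times> UNIV. (case x of (k, l) \<Rightarrow> spay M \<sigma> \<tau> k l n) * pmf (pair_pmf p q) x)"
    by simp
  also have "\<dots> = (\<Sum>k\<in>UNIV. \<Sum>l\<in>UNIV. pmf p k * pmf q l * spay M \<sigma> \<tau> k l n)"
    unfolding sum.cartesian_product by (intro sum.cong) (auto simp: pmf_pair)
  finally show ?thesis .
qed

end

lemma geo_facts:
  fixes lam :: real
  assumes "0 < lam" "lam < 1"
  shows "summable (\<lambda>n. lam * (1 - lam) ^ n)" "(\<Sum>n. lam * (1 - lam) ^ n) = 1"
proof -
  have n: "norm (1 - lam) < 1" using assms by simp
  show "summable (\<lambda>n. lam * (1 - lam) ^ n)" by (rule summable_mult[OF summable_geometric[OF n]])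
  show "(\<Sum>n. lam * (1 - lam) ^ n) = 1"
    using assms by (simp add: suminf_mult[OF summable_geometric[OF n]] suminf_geometric[OF n])
qed

lemma disc_summable:
  fixes lam :: real and s :: "nat \<Rightarrow> real"
  assumes "0 < lam" "lam < 1" "\<And>n. \<bar>s n\<bar> \<le> c"
  shows "summable (\<lambda>n. lam * (1 - lam) ^ n * s n)"
proof (rule summable_comparison_test'[where N=0])
  show "summable (\<lambda>n. c * (lam * (1 - lam) ^ n))" by (rule summable_mult[OF geo_facts(1)[OF assms(1,2)]])
  fix n
  have "\<bar>lam * (1 - lam) ^ n * s n\<bar> = lam * (1 - lam) ^ n * \<bar>s n\<bar>" using assms by (simp add: abs_mult)
  also have "\<dots> \<le> lam * (1 - lam) ^ n * c" using assms by (intro mult_left_mono) auto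
  finally show "norm (lam * (1 - lam) ^ n * s n) \<le> c * (lam * (1 - lam) ^ n)" by (simp add: mult_ac)
qed

lemma disc_bound:
  fixes lam :: real and s :: "nat \<Rightarrow> real"
  assumes "0 < lam" "lam < 1" "\<And>n. \<bar>s n\<bar> \<le> c"
  shows "\<bar>\<Sum>n. lam * (1 - lam) ^ n * s n\<bar> \<le> c"
proof -
  have sc: "summable (\<lambda>n. c * (lam * (1 - lam) ^ n))" by (rule summable_mult[OF geo_facts(1)[OF assms(1,2)]])
  have a: "\<And>n. \<bar>lam * (1 - lam) ^ n * s n\<bar> \<le> c * (lam * (1 - lam) ^ n)"
  proof -
    fix n
    have "\<bar>lam * (1 - lam) ^ n * s n\<bar> = lam * (1 - lam) ^ n * \<bar>s n\<bar>" using assms by (simp add: abs_mult)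
    also have "\<dots> \<le> lam * (1 - lam) ^ n * c" using assms by (intro mult_left_mono) auto
    finally show "\<bar>lam * (1 - lam) ^ n * s n\<bar> \<le> c * (lam * (1 - lam) ^ n)" by (simp add: mult_ac)
  qed
  have sa: "summable (\<lambda>n. \<bar>lam * (1 - lam) ^ n * s n\<bar>)"
    by (rule summable_comparison_test'[OF sc]) (use a in auto)
  have "\<bar>\<Sum>n. lam * (1 - lam) ^ n * s n\<bar> \<le> (\<Sum>n. \<bar>lam * (1 - lam) ^ n * s n\<bar>)" by (rule summable_rabs[OF sa])
  also have "\<dots> \<le> (\<Sum>n. c * (lam * (1 - lam) ^ n))" by (rule suminf_le[OF a sa sc])
  also have "\<dots> = c" using geo_facts[OF assms(1,2)] by (simp add: suminf_mult)
  finally show ?thesis .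
qed

lemma trunc_bound:
  fixes lam :: real and s :: "nat \<Rightarrow> real"
  assumes "0 < lam" "lam < 1" "\<And>n. \<bar>s n\<bar> \<le> c"
  shows "\<bar>\<Sum>n<T. lam * (1 - lam) ^ n * s n\<bar> \<le> c"
proof -
  have "\<bar>\<Sum>n<T. lam * (1 - lam) ^ n * s n\<bar> \<le> (\<Sum>n<T. \<bar>lam * (1 - lam) ^ n * s n\<bar>)" by (rule sum_abs)
  also have "\<dots> \<le> (\<Sum>n<T. c * (lam * (1 - lam) ^ n))"
  proof (rule sum_mono)
    fix n
    have "\<bar>lam * (1 - lam) ^ n * s n\<bar> = lam * (1 - lam) ^ n * \<bar>s n\<bar>" using assms by (simp add: abs_mult)
    also have "\<dots> \<le> lam * (1 - lam) ^ n * c" using assms by (intro mult_left_mono) auto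
    finally show "\<bar>lam * (1 - lam) ^ n * s n\<bar> \<le> c * (lam * (1 - lam) ^ n)" by (simp add: mult_ac)
  qed
  also have "\<dots> = c * (\<Sum>n<T. lam * (1 - lam) ^ n)" by (simp add: sum_distrib_left)
  also have "\<dots> \<le> c * 1"
  proof -
    have "(\<Sum>n<T. lam * (1 - lam) ^ n) \<le> (\<Sum>n. lam * (1 - lam) ^ n)"
      by (rule sum_le_suminf[OF geo_facts(1)[OF assms(1,2)]]) (use assms in auto)
    moreover have "0 \<le> c" using assms(3)[of 0] by linarith
    ultimately show ?thesis using geo_facts(2)[OF assms(1,2)] by (intro mult_left_mono) auto
  qed
  finally show ?thesis by simp
qed


definition good :: "('k::finite pmf \<Rightarrow> 'l::finite pmf \<Rightarrow> ('k,'a,'b) strat1 \<Rightarrow> ('l,'a,'b) strat2 \<Rightarrow> real) \<Rightarrow> real \<Rightarrow> bool" where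
  "good G B \<longleftrightarrow>
    (\<forall>p q \<sigma> \<tau>. G p q \<sigma> \<tau> = (\<Sum>k\<in>UNIV. \<Sum>l\<in>UNIV. pmf p k * pmf q l * G (return_pmf k) (return_pmf l) \<sigma> \<tau>)) \<and>
    (\<forall>k l \<sigma> \<tau>. \<bar>G (return_pmf k) (return_pmf l) \<sigma> \<tau>\<bar> \<le> B) \<and>
    (\<forall>k l \<sigma> \<tau> \<tau>'. \<tau> l = \<tau>' l \<longrightarrow> G (return_pmf k) (return_pmf l) \<sigma> \<tau> = G (return_pmf k) (return_pmf l) \<sigma> \<tau>') \<and>
    (\<forall>\<sigma>1 \<sigma>2 \<alpha>. (\<forall>k. 0 \<le> \<alpha> k \<and> \<alpha> k \<le> 1) \<longrightarrow> (\<exists>\<sigma>. \<forall>k l \<tau>.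
        G (return_pmf k) (return_pmf l) \<sigma> \<tau> = \<alpha> k * G (return_pmf k) (return_pmf l) \<sigma>1 \<tau> + (1 - \<alpha> k) * G (return_pmf k) (return_pmf l) \<sigma>2 \<tau>))"

context
  fixes M :: "'k::finite \<Rightarrow> 'l::finite \<Rightarrow> 'a::finite \<Rightarrow> 'b::finite \<Rightarrow> real"
    and lam :: real
  assumes lam: "0 < lam" "lam < 1"
begin

lemma disc_ret: "disc_pay M lam (return_pmf k) (return_pmf l) \<sigma> \<tau> = (\<Sum>n. lam * (1 - lam) ^ n * spay M \<sigma> \<tau> k l n)"
  unfolding disc_pay_def spay_def ..

lemma spay_summ: "summable (\<lambda>n. lam * (1 - lam) ^ n * spay M \<sigma> \<tau> k l n)"
  by (rule disc_summable[OF lam spay_bound])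

lemma good_disc: "good (disc_pay M lam) (mB M)"
  unfolding good_def
proof (intro conjI allI impI)
  fix p q \<sigma> \<tau>
  have "disc_pay M lam p q \<sigma> \<tau> = (\<Sum>n. \<Sum>k\<in>UNIV. \<Sum>l\<in>UNIV. pmf p k * pmf q l * (lam * (1 - lam) ^ n * spay M \<sigma> \<tau> k l n))"
    unfolding disc_pay_def stage_lin by (simp add: sum_distrib_left mult_ac)
  also have "\<dots> = (\<Sum>k\<in>UNIV. \<Sum>l\<in>UNIV. \<Sum>n. pmf p k * pmf q l * (lam * (1 - lam) ^ n * spay M \<sigma> \<tau> k l n))"
    by (subst suminf_sum, intro summable_sum summable_mult spay_summ, subst suminf_sum, intro summable_mult spay_summ, simp)
  also have "\<dots> = (\<Sum>k\<in>UNIV. \<Sum>l\<in>UNIV. pmf p k * pmf q l * disc_pay M lam (return_pmf k) (return_pmf l) \<sigma> \<tau>)"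
    unfolding disc_ret by (simp add: suminf_mult[OF spay_summ])
  finally show "disc_pay M lam p q \<sigma> \<tau> = (\<Sum>k\<in>UNIV. \<Sum>l\<in>UNIV. pmf p k * pmf q l * disc_pay M lam (return_pmf k) (return_pmf l) \<sigma> \<tau>)" .
next
  fix k l \<sigma> \<tau>
  show "\<bar>disc_pay M lam (return_pmf k) (return_pmf l) \<sigma> \<tau>\<bar> \<le> mB M"
    unfolding disc_ret by (rule disc_bound[OF lam spay_bound])
next
  fix k l \<sigma> and \<tau> \<tau>' :: "('l,'a,'b) strat2"
  assume "\<tau> l = \<tau>' l"
  then show "disc_pay M lam (return_pmf k) (return_pmf l) \<sigma> \<tau> = disc_pay M lam (return_pmf k) (return_pmf l) \<sigma> \<tau>'"
    unfolding disc_ret using spay_local[of \<sigma> k \<sigma> \<tau> l \<tau>' M] by simp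
next
  fix \<sigma>1 \<sigma>2 :: "('k,'a,'b) strat1" and \<alpha> :: "'k \<Rightarrow> real"
  assume a: "\<forall>k. 0 \<le> \<alpha> k \<and> \<alpha> k \<le> 1"
  show "\<exists>\<sigma>. \<forall>k l \<tau>. disc_pay M lam (return_pmf k) (return_pmf l) \<sigma> \<tau> =
     \<alpha> k * disc_pay M lam (return_pmf k) (return_pmf l) \<sigma>1 \<tau> + (1 - \<alpha> k) * disc_pay M lam (return_pmf k) (return_pmf l) \<sigma>2 \<tau>"
  proof (intro exI allI)
    fix k l \<tau>
    have "disc_pay M lam (return_pmf k) (return_pmf l) (mixs \<alpha> \<sigma>1 \<sigma>2) \<tau> =
       (\<Sum>n. \<alpha> k * (lam * (1 - lam) ^ n * spay M \<sigma>1 \<tau> k l n) + (1 - \<alpha> k) * (lam * (1 - lam) ^ n * spay M \<sigma>2 \<tau> k l n))"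
      unfolding disc_ret using a by (simp add: spay_mix algebra_simps)
    also have "\<dots> = \<alpha> k * disc_pay M lam (return_pmf k) (return_pmf l) \<sigma>1 \<tau> + (1 - \<alpha> k) * disc_pay M lam (return_pmf k) (return_pmf l) \<sigma>2 \<tau>"
      unfolding disc_ret
      by (subst suminf_add[symmetric], (intro summable_mult spay_summ)+, simp add: suminf_mult[OF spay_summ])
    finally show "disc_pay M lam (return_pmf k) (return_pmf l) (mixs \<alpha> \<sigma>1 \<sigma>2) \<tau> =
       \<alpha> k * disc_pay M lam (return_pmf k) (return_pmf l) \<sigma>1 \<tau> + (1 - \<alpha> k) * disc_pay M lam (return_pmf k) (return_pmf l) \<sigma>2 \<tau>" .
  qed
qed

lemma trunc_ret: "trunc_pay M lam T (return_pmf k) (return_pmf l) \<sigma> \<tau> = (\<Sum>n<T. lam * (1 - lam) ^ n * spay M \<sigma> \<tau> k l n)"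
  unfolding trunc_pay_def spay_def ..

lemma good_trunc: "good (trunc_pay M lam T) (mB M)"
  unfolding good_def
proof (intro conjI allI impI)
  fix p q \<sigma> \<tau>
  show "trunc_pay M lam T p q \<sigma> \<tau> = (\<Sum>k\<in>UNIV. \<Sum>l\<in>UNIV. pmf p k * pmf q l * trunc_pay M lam T (return_pmf k) (return_pmf l) \<sigma> \<tau>)"
  proof -
    have "trunc_pay M lam T p q \<sigma> \<tau> = (\<Sum>n<T. \<Sum>k\<in>UNIV. \<Sum>l\<in>UNIV. pmf p k * pmf q l * (lam * (1 - lam) ^ n * spay M \<sigma> \<tau> k l n))"
      unfolding trunc_pay_def stage_lin by (simp add: sum_distrib_left mult_ac)
    also have "\<dots> = (\<Sum>k\<in>UNIV. \<Sum>l\<in>UNIV. \<Sum>n<T. pmf p k * pmf q l * (lam * (1 - lam) ^ n * spay M \<sigma> \<tau> k l n))"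
      by (subst sum.swap, subst sum.swap, simp)
    also have "\<dots> = (\<Sum>k\<in>UNIV. \<Sum>l\<in>UNIV. pmf p k * pmf q l * trunc_pay M lam T (return_pmf k) (return_pmf l) \<sigma> \<tau>)"
      unfolding trunc_ret by (simp add: sum_distrib_left)
    finally show ?thesis .
  qed
next
  fix k l \<sigma> \<tau>
  show "\<bar>trunc_pay M lam T (return_pmf k) (return_pmf l) \<sigma> \<tau>\<bar> \<le> mB M"
    unfolding trunc_ret by (rule trunc_bound[OF lam spay_bound])
next
  fix k l \<sigma> and \<tau> \<tau>' :: "('l,'a,'b) strat2"
  assume "\<tau> l = \<tau>' l"
  then show "trunc_pay M lam T (return_pmf k) (return_pmf l) \<sigma> \<tau> = trunc_pay M lam T (return_pmf k) (return_pmf l) \<sigma> \<tau>'"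
    unfolding trunc_ret using spay_local[of \<sigma> k \<sigma> \<tau> l \<tau>' M] by simp
next
  fix \<sigma>1 \<sigma>2 :: "('k,'a,'b) strat1" and \<alpha> :: "'k \<Rightarrow> real"
  assume a: "\<forall>k. 0 \<le> \<alpha> k \<and> \<alpha> k \<le> 1"
  show "\<exists>\<sigma>. \<forall>k l \<tau>. trunc_pay M lam T (return_pmf k) (return_pmf l) \<sigma> \<tau> =
     \<alpha> k * trunc_pay M lam T (return_pmf k) (return_pmf l) \<sigma>1 \<tau> + (1 - \<alpha> k) * trunc_pay M lam T (return_pmf k) (return_pmf l) \<sigma>2 \<tau>"
    by (rule exI[of _ "mixs \<alpha> \<sigma>1 \<sigma>2"])
       (use a in \<open>simp add: trunc_ret spay_mix algebra_simps sum.distrib sum_distrib_left sum_subtractf\<close>)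
qed

end


lemma sup_diff_le:
  fixes f g :: "'i \<Rightarrow> real"
  assumes "\<And>i. \<bar>f i - g i\<bar> \<le> c" "bdd_above (range f)" "bdd_above (range g)"
  shows "\<bar>(SUP i. f i) - (SUP i. g i)\<bar> \<le> c"
proof -
  have "(SUP i. f i) \<le> (SUP i. g i) + c"
  proof (rule cSUP_least)
    fix i
    have "g i \<le> (SUP i. g i)" by (rule cSUP_upper[OF _ assms(3)]) simp
    then show "f i \<le> (SUP i. g i) + c" using assms(1)[of i] by linarith
  qed simp
  moreover have "(SUP i. g i) \<le> (SUP i. f i) + c"
  proof (rule cSUP_least)
    fix i
    have "f i \<le> (SUP i. f i)" by (rule cSUP_upper[OF _ assms(2)]) simp
    then show "g i \<le> (SUP i. f i) + c" using assms(1)[of i] by linarith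
  qed simp
  ultimately show ?thesis by linarith
qed

lemma inf_diff_le:
  fixes f g :: "'i \<Rightarrow> real"
  assumes "\<And>i. \<bar>f i - g i\<bar> \<le> c" "bdd_below (range f)" "bdd_below (range g)"
  shows "\<bar>(INF i. f i) - (INF i. g i)\<bar> \<le> c"
proof -
  have "(INF i. g i) - c \<le> (INF i. f i)"
  proof (rule cINF_greatest)
    fix i
    have "(INF i. g i) \<le> g i" by (rule cINF_lower[OF assms(3)]) simp
    then show "(INF i. g i) - c \<le> f i" using assms(1)[of i] by linarith
  qed simp
  moreover have "(INF i. f i) - c \<le> (INF i. g i)"
  proof (rule cINF_greatest)
    fix i
    have "(INF i. f i) \<le> f i" by (rule cINF_lower[OF assms(2)]) simp
    then show "(INF i. f i) - c \<le> g i" using assms(1)[of i] by linarith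
  qed simp
  ultimately show ?thesis by linarith
qed

lemma inf_add_const:
  fixes f :: "'i \<Rightarrow> real"
  assumes "bdd_below (range f)"
  shows "(INF i. c + f i) = c + (INF i. f i)"
proof (rule antisym)
  have b: "bdd_below (range (\<lambda>i. c + f i))"
    using assms by (auto simp: bdd_below_def) (metis add_le_cancel_left)
  have "(INF i. c + f i) - c \<le> (INF i. f i)"
  proof (rule cINF_greatest)
    fix i show "(INF i. c + f i) - c \<le> f i" using cINF_lower[OF b, of i] by simp
  qed simp
  then show "(INF i. c + f i) \<le> c + (INF i. f i)" by simp
  show "c + (INF i. f i) \<le> (INF i. c + f i)"
    by (rule cINF_greatest) (use cINF_lower[OF assms] in auto)
qed

lemma sup_add_const:
  fixes f :: "'i \<Rightarrow> real"
  assumes "bdd_above (range f)"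
  shows "(SUP i. c + f i) = c + (SUP i. f i)"
proof (rule antisym)
  have b: "bdd_above (range (\<lambda>i. c + f i))"
    using assms by (auto simp: bdd_above_def) (metis add_le_cancel_left)
  have "(SUP i. f i) \<le> (SUP i. c + f i) - c"
  proof (rule cSUP_least)
    fix i show "f i \<le> (SUP i. c + f i) - c" using cSUP_upper[OF _ b, of i] by simp
  qed simp
  then show "c + (SUP i. f i) \<le> (SUP i. c + f i)" by simp
  show "(SUP i. c + f i) \<le> c + (SUP i. f i)"
    by (rule cSUP_least) (use cSUP_upper[OF _ assms] in auto)
qed

lemma sup_pair:
  fixes h :: "'i \<Rightarrow> 'j \<Rightarrow> real"
  assumes "\<And>x y. h x y \<le> C"
  shows "(SUP (x, y). h x y) = (SUP x. SUP y. h x y)"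
proof -
  have b1: "\<And>x. bdd_above (range (h x))" using assms by (auto simp: bdd_above_def)
  have b2: "bdd_above (range (\<lambda>x. SUP y. h x y))"
    using assms by (auto simp: bdd_above_def intro!: exI[of _ C] cSUP_least)
  have b3: "bdd_above (range (\<lambda>(x, y). h x y))" using assms by (auto simp: bdd_above_def)
  show ?thesis
  proof (rule antisym)
    show "(SUP (x, y). h x y) \<le> (SUP x. SUP y. h x y)"
    proof (rule cSUP_least)
      fix z :: "'i \<times> 'j"
      obtain x y where z: "z = (x, y)" by fastforce
      have "h x y \<le> (SUP y. h x y)" by (rule cSUP_upper[OF _ b1]) simp
      also have "\<dots> \<le> (SUP x. SUP y. h x y)" by (rule cSUP_upper[OF _ b2]) simp
      finally show "(case z of (x, y) \<Rightarrow> h x y) \<le> (SUP x. SUP y. h x y)" using z by simp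
    qed simp
    show "(SUP x. SUP y. h x y) \<le> (SUP (x, y). h x y)"
    proof (rule cSUP_least)
      fix x
      show "(SUP y. h x y) \<le> (SUP (x, y). h x y)"
      proof (rule cSUP_least)
        fix y
        show "h x y \<le> (SUP (x, y). h x y)" using cSUP_upper[OF _ b3, of "(x, y)"] by simp
      qed simp
    qed simp
  qed
qed


lemma sum_pmf_UNIV: "(\<Sum>k\<in>(UNIV::'x::finite set). pmf p k) = 1"
  by (rule sum_pmf_eq_1) auto

lemma E_sum: "measure_pmf.expectation (y :: 'x::finite pmf) (\<nu> :: 'x \<Rightarrow> real) = (\<Sum>l\<in>UNIV. pmf y l * \<nu> l)"
  by (subst integral_measure_pmf_real[where A=UNIV]) (auto simp: mult_ac)

lemma E_bound: "\<bar>measure_pmf.expectation (y :: 'x::finite pmf) (\<nu> :: 'x \<Rightarrow> real)\<bar> \<le> (\<Sum>l\<in>UNIV. \<bar>\<nu> l\<bar>)"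
proof -
  have "\<bar>\<Sum>l\<in>UNIV. pmf y l * \<nu> l\<bar> \<le> (\<Sum>l\<in>UNIV. \<bar>pmf y l * \<nu> l\<bar>)" by (rule sum_abs)
  also have "\<dots> \<le> (\<Sum>l\<in>UNIV. \<bar>\<nu> l\<bar>)"
    by (rule sum_mono) (auto simp: abs_mult intro!: mult_left_le_one_le pmf_le_1)
  finally show ?thesis by (simp add: E_sum)
qed

lemma pmf_of_weights:
  fixes w :: "'x::finite \<Rightarrow> real"
  assumes "\<And>l. 0 \<le> w l" "(\<Sum>l\<in>UNIV. w l) = 1"
  shows "\<exists>y. \<forall>l. pmf y l = w l"
proof -
  have "(\<integral>\<^sup>+x. ennreal (w x) \<partial>count_space UNIV) = 1"
    using assms by (simp add: nn_integral_count_space_finite)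
  then show ?thesis using pmf_embed_pmf[of w] assms by blast
qed

definition Gv :: "('k pmf \<Rightarrow> 'l pmf \<Rightarrow> ('k,'a,'b) strat1 \<Rightarrow> ('l,'a,'b) strat2 \<Rightarrow> real) \<Rightarrow> 'k pmf \<Rightarrow> 'l pmf \<Rightarrow> ('k,'a,'b) strat1 \<Rightarrow> real" where
  "Gv G p q \<sigma> = (INF \<tau>. G p q \<sigma> \<tau>)"

context
  fixes G :: "'k::finite pmf \<Rightarrow> 'l::finite pmf \<Rightarrow> ('k,'a,'b) strat1 \<Rightarrow> ('l,'a,'b) strat2 \<Rightarrow> real"
    and B :: real
  assumes gd: "good G B"
begin

lemma G_lin: "G p q \<sigma> \<tau> = (\<Sum>k\<in>UNIV. \<Sum>l\<in>UNIV. pmf p k * pmf q l * G (return_pmf k) (return_pmf l) \<sigma> \<tau>)"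
  by (rule gd[unfolded good_def, THEN conjunct1, rule_format])

lemma G_rb: "\<bar>G (return_pmf k) (return_pmf l) \<sigma> \<tau>\<bar> \<le> B"
  by (rule gd[unfolded good_def, THEN conjunct2, THEN conjunct1, rule_format])

lemma G_loc: "\<tau> l = \<tau>' l \<Longrightarrow> G (return_pmf k) (return_pmf l) \<sigma> \<tau> = G (return_pmf k) (return_pmf l) \<sigma> \<tau>'"
  by (rule gd[unfolded good_def, THEN conjunct2, THEN conjunct2, THEN conjunct1, rule_format])

lemma G_mix: "(\<And>k. 0 \<le> \<alpha> k \<and> \<alpha> k \<le> 1) \<Longrightarrow> \<exists>\<sigma>. \<forall>k l \<tau>.
        G (return_pmf k) (return_pmf l) \<sigma> \<tau> = \<alpha> k * G (return_pmf k) (return_pmf l) \<sigma>1 \<tau> + (1 - \<alpha> k) * G (return_pmf k) (return_pmf l) \<sigma>2 \<tau>"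
  using gd[unfolded good_def, THEN conjunct2, THEN conjunct2, THEN conjunct2, rule_format] by blast

lemma B_nonneg: "0 \<le> B"
  using G_rb[of undefined undefined undefined undefined] by linarith

lemma G_ret_q: "G p (return_pmf l) \<sigma> \<tau> = (\<Sum>k\<in>UNIV. pmf p k * G (return_pmf k) (return_pmf l) \<sigma> \<tau>)"
proof -
  have "\<And>k. (\<Sum>la\<in>UNIV. pmf p k * pmf (return_pmf l) la * G (return_pmf k) (return_pmf la) \<sigma> \<tau>)
     = (\<Sum>la\<in>UNIV. if la = l then pmf p k * G (return_pmf k) (return_pmf l) \<sigma> \<tau> else 0)"
    by (rule sum.cong) (auto simp: pmf_return)
  then show ?thesis by (subst G_lin) simp
qed

lemma G_ret_p: "G (return_pmf k) q \<sigma> \<tau> = (\<Sum>l\<in>UNIV. pmf q l * G (return_pmf k) (return_pmf l) \<sigma> \<tau>)"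
proof -
  have "(\<Sum>ka\<in>UNIV. \<Sum>l\<in>UNIV. pmf (return_pmf k) ka * pmf q l * G (return_pmf ka) (return_pmf l) \<sigma> \<tau>)
     = (\<Sum>ka\<in>UNIV. if ka = k then (\<Sum>l\<in>UNIV. pmf q l * G (return_pmf k) (return_pmf l) \<sigma> \<tau>) else 0)"
    by (rule sum.cong) (auto simp: pmf_return)
  then show ?thesis by (subst G_lin) simp
qed

lemma lin_q: "G p y \<sigma> \<tau> = (\<Sum>l\<in>UNIV. pmf y l * G p (return_pmf l) \<sigma> \<tau>)"
proof -
  have "(\<Sum>l\<in>UNIV. pmf y l * (\<Sum>k\<in>UNIV. pmf p k * G (return_pmf k) (return_pmf l) \<sigma> \<tau>))
      = (\<Sum>l\<in>UNIV. \<Sum>k\<in>UNIV. pmf p k * pmf y l * G (return_pmf k) (return_pmf l) \<sigma> \<tau>)"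
    by (simp add: sum_distrib_left mult.left_commute mult.assoc)
  also have "\<dots> = (\<Sum>k\<in>UNIV. \<Sum>l\<in>UNIV. pmf p k * pmf y l * G (return_pmf k) (return_pmf l) \<sigma> \<tau>)"
    by (rule sum.swap)
  finally show ?thesis by (subst G_lin) (simp only: G_ret_q[of p])
qed

lemma lin_p: "G x q \<sigma> \<tau> = (\<Sum>k\<in>UNIV. pmf x k * G (return_pmf k) q \<sigma> \<tau>)"
  by (subst G_lin) (simp add: sum_distrib_left mult.assoc G_ret_p[of _ q])

lemma G_bound: "\<bar>G p q \<sigma> \<tau>\<bar> \<le> B"
proof -
  have "\<bar>G p q \<sigma> \<tau>\<bar> \<le> (\<Sum>k\<in>UNIV. \<bar>pmf p k * G (return_pmf k) q \<sigma> \<tau>\<bar>)"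
    unfolding lin_p[of p] by (rule sum_abs)
  also have "\<dots> \<le> (\<Sum>k\<in>UNIV. pmf p k * B)"
  proof (rule sum_mono)
    fix k
    have "\<bar>G (return_pmf k) q \<sigma> \<tau>\<bar> \<le> (\<Sum>l\<in>UNIV. \<bar>pmf q l * G (return_pmf k) (return_pmf l) \<sigma> \<tau>\<bar>)"
      unfolding G_ret_p[of k q] by (rule sum_abs)
    also have "\<dots> \<le> (\<Sum>l\<in>UNIV. pmf q l * B)"
      by (rule sum_mono) (auto simp: abs_mult intro!: mult_left_mono G_rb)
    also have "\<dots> = B" by (simp add: sum_distrib_right[symmetric] sum_pmf_UNIV)
    finally show "\<bar>pmf p k * G (return_pmf k) q \<sigma> \<tau>\<bar> \<le> pmf p k * B"
      by (auto simp: abs_mult intro!: mult_left_mono)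
  qed
  also have "\<dots> = B" by (simp add: sum_distrib_right[symmetric] sum_pmf_UNIV)
  finally show ?thesis .
qed

lemma Gv_bdd: "bdd_below (range (G p q \<sigma>))"
  unfolding bdd_below_def
proof (intro exI ballI)
  fix x assume "x \<in> range (G p q \<sigma>)"
  then obtain \<tau> where "x = G p q \<sigma> \<tau>" by auto
  then show "-B \<le> x" using G_bound[of p q \<sigma> \<tau>] by linarith
qed

lemma Gv_le: "Gv G p q \<sigma> \<le> G p q \<sigma> \<tau>"
  unfolding Gv_def by (rule cINF_lower[OF Gv_bdd]) simp

lemma Gv_abs: "\<bar>Gv G p q \<sigma>\<bar> \<le> B"
proof -
  have "-B \<le> Gv G p q \<sigma>" unfolding Gv_def
    by (rule cINF_greatest) (use G_bound in \<open>auto simp: abs_le_iff\<close>, smt (verit) G_bound abs_le_iff)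
  moreover have "Gv G p q \<sigma> \<le> B" using Gv_le[of p q \<sigma> undefined] G_bound[of p q \<sigma> undefined] by linarith
  ultimately show ?thesis by linarith
qed

lemma W_bdd: "bdd_above (range (Gv G p q))"
  using Gv_abs by (auto simp: bdd_above_def abs_le_iff intro!: exI[of _ B])

lemma W_ge: "Gv G p q \<sigma> \<le> game_val G p q"
  unfolding game_val_def Gv_def[symmetric] by (rule cSUP_upper[OF _ W_bdd]) simp

lemma W_abs: "\<bar>game_val G p q\<bar> \<le> B"
proof -
  have "game_val G p q \<le> B" unfolding game_val_def Gv_def[symmetric]
    by (rule cSUP_least) (use Gv_abs in \<open>auto simp: abs_le_iff\<close>)
  moreover have "-B \<le> game_val G p q" using W_ge[of p q undefined] Gv_abs[of p q undefined] by linarith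
  ultimately show ?thesis by linarith
qed

lemma Gv_lin: "Gv G p y \<sigma> = (\<Sum>l\<in>UNIV. pmf y l * Gv G p (return_pmf l) \<sigma>)"
proof (rule antisym)
  show "(\<Sum>l\<in>UNIV. pmf y l * Gv G p (return_pmf l) \<sigma>) \<le> Gv G p y \<sigma>"
    unfolding Gv_def[of G p y]
  proof (rule cINF_greatest)
    fix \<tau>
    show "(\<Sum>l\<in>UNIV. pmf y l * Gv G p (return_pmf l) \<sigma>) \<le> G p y \<sigma> \<tau>"
      unfolding lin_q[of p y] by (rule sum_mono) (auto intro!: mult_left_mono Gv_le)
  qed simp
  show "Gv G p y \<sigma> \<le> (\<Sum>l\<in>UNIV. pmf y l * Gv G p (return_pmf l) \<sigma>)"
  proof (rule field_le_epsilon)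
    fix e :: real assume e: "0 < e"
    have "\<forall>l. \<exists>\<tau>. G p (return_pmf l) \<sigma> \<tau> < Gv G p (return_pmf l) \<sigma> + e"
    proof
      fix l
      have "(INF \<tau>. G p (return_pmf l) \<sigma> \<tau>) < Gv G p (return_pmf l) \<sigma> + e" using e by (simp add: Gv_def)
      then show "\<exists>\<tau>. G p (return_pmf l) \<sigma> \<tau> < Gv G p (return_pmf l) \<sigma> + e"
        by (subst (asm) cINF_less_iff[OF _ Gv_bdd]) auto
    qed
    then obtain t where t: "\<And>l. G p (return_pmf l) \<sigma> (t l) < Gv G p (return_pmf l) \<sigma> + e" by metis
    define \<tau> where "\<tau> = (\<lambda>l. t l l)"
    have eq: "G p (return_pmf l) \<sigma> \<tau> = G p (return_pmf l) \<sigma> (t l)" for l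
      unfolding G_ret_q[of p] by (intro sum.cong refl arg_cong2[where f="(*)"] G_loc) (simp add: \<tau>_def)
    have "Gv G p y \<sigma> \<le> G p y \<sigma> \<tau>" by (rule Gv_le)
    also have "\<dots> = (\<Sum>l\<in>UNIV. pmf y l * G p (return_pmf l) \<sigma> (t l))" unfolding lin_q[of p y] eq ..
    also have "\<dots> \<le> (\<Sum>l\<in>UNIV. pmf y l * (Gv G p (return_pmf l) \<sigma> + e))"
      by (rule sum_mono) (auto intro!: mult_left_mono less_imp_le[OF t])
    also have "\<dots> = (\<Sum>l\<in>UNIV. pmf y l * Gv G p (return_pmf l) \<sigma>) + e"
      by (simp add: distrib_left sum.distrib sum_distrib_right[symmetric] sum_pmf_UNIV)
    finally show "Gv G p y \<sigma> \<le> (\<Sum>l\<in>UNIV. pmf y l * Gv G p (return_pmf l) \<sigma>) + e" .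
  qed
qed


lemma dual1_eq: "dual_val1 G \<mu> q = (SUP x. measure_pmf.expectation x \<mu> + game_val G x q)"
proof -
  have a: "\<And>x \<sigma>. (INF \<tau>. measure_pmf.expectation x \<mu> + G x q \<sigma> \<tau>) = measure_pmf.expectation x \<mu> + Gv G x q \<sigma>"
    by (simp add: Gv_def inf_add_const[OF Gv_bdd])
  have "dual_val1 G \<mu> q = (SUP (x, \<sigma>). measure_pmf.expectation x \<mu> + Gv G x q \<sigma>)"
    unfolding dual_val1_def a ..
  also have "\<dots> = (SUP x. SUP \<sigma>. measure_pmf.expectation x \<mu> + Gv G x q \<sigma>)"
  proof (rule sup_pair)
    fix x \<sigma>
    show "measure_pmf.expectation x \<mu> + Gv G x q \<sigma> \<le> (\<Sum>l\<in>UNIV. \<bar>\<mu> l\<bar>) + B"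
      using E_bound[of x \<mu>] Gv_abs[of x q \<sigma>] by linarith
  qed
  also have "\<dots> = (SUP x. measure_pmf.expectation x \<mu> + game_val G x q)"
    unfolding game_val_def Gv_def[symmetric] by (simp add: sup_add_const[OF W_bdd])
  finally show ?thesis .
qed

definition Phi where "Phi p \<nu> \<sigma> = (INF (y, \<tau>). measure_pmf.expectation y \<nu> + G p y \<sigma> \<tau>)"

lemma Phi_bdd: "bdd_below (range (\<lambda>(y, \<tau>). measure_pmf.expectation y \<nu> + G p y \<sigma> \<tau>))"
  unfolding bdd_below_def
proof (intro exI ballI)
  fix z assume "z \<in> range (\<lambda>(y, \<tau>). measure_pmf.expectation y \<nu> + G p y \<sigma> \<tau>)"
  then obtain y \<tau> where z: "z = measure_pmf.expectation y \<nu> + G p y \<sigma> \<tau>" by auto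
  show "- (\<Sum>l\<in>UNIV. \<bar>\<nu> l\<bar>) - B \<le> z"
    using E_bound[of y \<nu>] G_bound[of p y \<sigma> \<tau>] z by linarith
qed

lemma Phi_le: "Phi p \<nu> \<sigma> \<le> measure_pmf.expectation y \<nu> + G p y \<sigma> \<tau>"
  unfolding Phi_def using cINF_lower[OF Phi_bdd, of "(y, \<tau>)"] by simp

lemma Phi_ub: "Phi p \<nu> \<sigma> \<le> measure_pmf.expectation y \<nu> + Gv G p y \<sigma>"
proof -
  have "Phi p \<nu> \<sigma> - measure_pmf.expectation y \<nu> \<le> Gv G p y \<sigma>"
    unfolding Gv_def
  proof (rule cINF_greatest)
    fix \<tau> show "Phi p \<nu> \<sigma> - measure_pmf.expectation y \<nu> \<le> G p y \<sigma> \<tau>" using Phi_le[of p \<nu> \<sigma> y \<tau>] by linarith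
  qed simp
  then show ?thesis by simp
qed

lemma dual2_bdd: "bdd_above (range (Phi p \<nu>))"
  unfolding bdd_above_def
proof (intro exI ballI)
  fix z assume "z \<in> range (Phi p \<nu>)"
  then obtain \<sigma> where z: "z = Phi p \<nu> \<sigma>" by auto
  show "(\<Sum>l\<in>UNIV. \<bar>\<nu> l\<bar>) + B \<ge> z"
    using Phi_ub[of p \<nu> \<sigma> undefined] E_bound[of undefined \<nu>] Gv_abs[of p undefined \<sigma>] z by linarith
qed

lemma dual2_Phi: "dual_val2 G p \<nu> = (SUP \<sigma>. Phi p \<nu> \<sigma>)"
  unfolding dual_val2_def Phi_def ..

lemma dual2_ge: "Phi p \<nu> \<sigma> \<le> dual_val2 G p \<nu>"
  unfolding dual2_Phi by (rule cSUP_upper[OF _ dual2_bdd]) simp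

lemma dual2_le: "dual_val2 G p \<nu> \<le> measure_pmf.expectation y \<nu> + game_val G p y"
  unfolding dual2_Phi
proof (rule cSUP_least)
  fix \<sigma>
  show "Phi p \<nu> \<sigma> \<le> measure_pmf.expectation y \<nu> + game_val G p y"
    using Phi_ub[of p \<nu> \<sigma> y] W_ge[of p y \<sigma>] by linarith
qed simp

lemma W_dual2: "game_val G p q = (SUP \<nu>. dual_val2 G p \<nu> - measure_pmf.expectation q \<nu>)"
proof -
  have bd: "bdd_above (range (\<lambda>\<nu>. dual_val2 G p \<nu> - measure_pmf.expectation q \<nu>))"
    using dual2_le[of p _ q] by (auto simp: bdd_above_def intro!: exI[of _ "game_val G p q"] simp: algebra_simps)
  show ?thesis
  proof (rule antisym)
    show "game_val G p q \<le> (SUP \<nu>. dual_val2 G p \<nu> - measure_pmf.expectation q \<nu>)"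
      unfolding game_val_def Gv_def[symmetric]
    proof (rule cSUP_least)
      fix \<sigma>
      define \<nu>0 where "\<nu>0 = (\<lambda>l. - Gv G p (return_pmf l) \<sigma>)"
      have "0 \<le> Phi p \<nu>0 \<sigma>"
        unfolding Phi_def
      proof (rule cINF_greatest)
        fix z :: "'l pmf \<times> ('l,'a,'b) strat2"
        obtain y \<tau> where z: "z = (y, \<tau>)" by fastforce
        have "measure_pmf.expectation y \<nu>0 = - Gv G p y \<sigma>"
          unfolding E_sum Gv_lin[of p y] \<nu>0_def by (simp add: sum_negf)
        then show "0 \<le> (case z of (y, \<tau>) \<Rightarrow> measure_pmf.expectation y \<nu>0 + G p y \<sigma> \<tau>)"
          using z Gv_le[of p y \<sigma> \<tau>] by simp
      qed simp
      then have "0 \<le> dual_val2 G p \<nu>0" using dual2_ge[of p \<nu>0 \<sigma>] by linarith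
      moreover have "- measure_pmf.expectation q \<nu>0 = Gv G p q \<sigma>"
        unfolding E_sum Gv_lin[of p q] \<nu>0_def by (simp add: sum_negf)
      ultimately have "Gv G p q \<sigma> \<le> dual_val2 G p \<nu>0 - measure_pmf.expectation q \<nu>0" by linarith
      also have "\<dots> \<le> (SUP \<nu>. dual_val2 G p \<nu> - measure_pmf.expectation q \<nu>)"
        by (rule cSUP_upper[OF _ bd]) simp
      finally show "Gv G p q \<sigma> \<le> (SUP \<nu>. dual_val2 G p \<nu> - measure_pmf.expectation q \<nu>)" .
    qed simp
    show "(SUP \<nu>. dual_val2 G p \<nu> - measure_pmf.expectation q \<nu>) \<le> game_val G p q"
      by (rule cSUP_least) (use dual2_le[of p _ q] in \<open>auto simp: algebra_simps\<close>)
  qed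
qed


lemma mix_const:
  assumes "0 \<le> u" "u \<le> 1"
  shows "\<exists>\<sigma>. \<forall>p q \<tau>. G p q \<sigma> \<tau> = u * G p q \<sigma>1 \<tau> + (1 - u) * G p q \<sigma>2 \<tau>"
proof -
  obtain \<sigma> where \<sigma>: "\<forall>k l \<tau>. G (return_pmf k) (return_pmf l) \<sigma> \<tau> =
      u * G (return_pmf k) (return_pmf l) \<sigma>1 \<tau> + (1 - u) * G (return_pmf k) (return_pmf l) \<sigma>2 \<tau>"
    using G_mix[of "\<lambda>_. u" \<sigma>1 \<sigma>2] assms by blast
  have "G p q \<sigma> \<tau> = u * G p q \<sigma>1 \<tau> + (1 - u) * G p q \<sigma>2 \<tau>" for p q \<tau>
  proof -
    have "G p q \<sigma> \<tau> = (\<Sum>k\<in>UNIV. \<Sum>l\<in>UNIV. pmf p k * pmf q l * (u * G (return_pmf k) (return_pmf l) \<sigma>1 \<tau> + (1 - u) * G (return_pmf k) (return_pmf l) \<sigma>2 \<tau>))"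
      by (subst G_lin) (simp only: \<sigma>)
    also have "\<dots> = u * (\<Sum>k\<in>UNIV. \<Sum>l\<in>UNIV. pmf p k * pmf q l * G (return_pmf k) (return_pmf l) \<sigma>1 \<tau>)
        + (1 - u) * (\<Sum>k\<in>UNIV. \<Sum>l\<in>UNIV. pmf p k * pmf q l * G (return_pmf k) (return_pmf l) \<sigma>2 \<tau>)"
      by (simp add: sum_distrib_left sum.distrib sum_subtractf algebra_simps)
    also have "\<dots> = u * G p q \<sigma>1 \<tau> + (1 - u) * G p q \<sigma>2 \<tau>"
      using G_lin[of p q \<sigma>1 \<tau>] G_lin[of p q \<sigma>2 \<tau>] by simp
    finally show ?thesis .
  qed
  then show ?thesis by blast
qed

lemma Gv_mix_const:
  assumes "0 \<le> u" "u \<le> 1"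
  shows "\<exists>\<sigma>. \<forall>p q. u * Gv G p q \<sigma>1 + (1 - u) * Gv G p q \<sigma>2 \<le> Gv G p q \<sigma>"
proof -
  obtain \<sigma> where \<sigma>: "\<forall>p q \<tau>. G p q \<sigma> \<tau> = u * G p q \<sigma>1 \<tau> + (1 - u) * G p q \<sigma>2 \<tau>"
    using mix_const[OF assms] by blast
  have "u * Gv G p q \<sigma>1 + (1 - u) * Gv G p q \<sigma>2 \<le> Gv G p q \<sigma>" for p q
    unfolding Gv_def[of G p q \<sigma>]
  proof (rule cINF_greatest)
    fix \<tau>
    show "u * Gv G p q \<sigma>1 + (1 - u) * Gv G p q \<sigma>2 \<le> G p q \<sigma> \<tau>"
      unfolding \<sigma>[rule_format] using assms
      by (intro add_mono mult_left_mono Gv_le) auto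
  qed simp
  then show ?thesis by blast
qed

lemma dual2_eq: "dual_val2 G p \<nu> = (INF y. measure_pmf.expectation y \<nu> + game_val G p y)"
proof -
  let ?f = "\<lambda>y. measure_pmf.expectation y \<nu> + game_val G p y"
  have fb: "bdd_below (range ?f)"
    unfolding bdd_below_def
  proof (intro exI ballI)
    fix z assume "z \<in> range ?f"
    then obtain y where z: "z = ?f y" by auto
    show "- (\<Sum>l\<in>UNIV. \<bar>\<nu> l\<bar>) - B \<le> z"
      using E_bound[of y \<nu>] W_abs[of p y] z by linarith
  qed
  define c where "c = (INF y. ?f y)"
  have c_le: "\<And>y. c \<le> ?f y" unfolding c_def using cINF_lower[OF fb] by simp
  show ?thesis
  proof (rule antisym)
    show "dual_val2 G p \<nu> \<le> (INF y. ?f y)"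
      by (rule cINF_greatest) (simp_all add: dual2_le)
    show "(INF y. ?f y) \<le> dual_val2 G p \<nu>"
    proof (rule field_le_epsilon)
      fix e :: real assume e: "0 < e"
      have claim: "\<exists>\<sigma>. \<forall>l. c - e \<le> \<nu> l + Gv G p (return_pmf l) \<sigma>"
      proof (rule ccontr)
        assume nc: "\<not> (\<exists>\<sigma>. \<forall>l. c - e \<le> \<nu> l + Gv G p (return_pmf l) \<sigma>)"
        define S :: "(real^'l) set" where "S = {z. \<exists>\<sigma>. \<forall>l. z$l \<le> \<nu> l + Gv G p (return_pmf l) \<sigma>}"
        define T :: "(real^'l) set" where "T = {z. \<forall>l. c - e \<le> z$l}"
        have cS: "convex S"
        proof (rule convexI)
          fix x y :: "real^'l" and u v :: real
          assume x: "x \<in> S" and y: "y \<in> S" and u: "0 \<le> u" and v: "0 \<le> v" and uv: "u + v = 1"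
          have v1: "v = 1 - u" using uv by linarith
          obtain \<sigma>1 where s1: "\<forall>l. x$l \<le> \<nu> l + Gv G p (return_pmf l) \<sigma>1" using x S_def by auto
          obtain \<sigma>2 where s2: "\<forall>l. y$l \<le> \<nu> l + Gv G p (return_pmf l) \<sigma>2" using y S_def by auto
          obtain \<sigma> where s: "\<forall>p q. u * Gv G p q \<sigma>1 + (1 - u) * Gv G p q \<sigma>2 \<le> Gv G p q \<sigma>"
            using Gv_mix_const[of u \<sigma>1 \<sigma>2] u v uv by auto
          have "\<forall>l. (u *\<^sub>R x + v *\<^sub>R y)$l \<le> \<nu> l + Gv G p (return_pmf l) \<sigma>"
          proof
            fix l
            have "(u *\<^sub>R x + v *\<^sub>R y)$l = u * x$l + v * y$l" by simp
            also have "\<dots> \<le> u * (\<nu> l + Gv G p (return_pmf l) \<sigma>1) + v * (\<nu> l + Gv G p (return_pmf l) \<sigma>2)"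
              using s1 s2 u v by (intro add_mono mult_left_mono) auto
            also have "\<dots> = \<nu> l + (u * Gv G p (return_pmf l) \<sigma>1 + (1 - u) * Gv G p (return_pmf l) \<sigma>2)"
              unfolding v1 by (simp add: algebra_simps)
            also have "\<dots> \<le> \<nu> l + Gv G p (return_pmf l) \<sigma>" using s by auto
            finally show "(u *\<^sub>R x + v *\<^sub>R y)$l \<le> \<nu> l + Gv G p (return_pmf l) \<sigma>" .
          qed
          then show "u *\<^sub>R x + v *\<^sub>R y \<in> S" unfolding S_def by blast
        qed
        have cT: "convex T"
        proof (rule convexI)
          fix x y :: "real^'l" and u v :: real
          assume x: "x \<in> T" and y: "y \<in> T" and u: "0 \<le> u" and v: "0 \<le> v" and uv: "u + v = 1"
          have v1: "v = 1 - u" using uv by linarith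
          have "\<forall>l. c - e \<le> (u *\<^sub>R x + v *\<^sub>R y)$l"
          proof
            fix l
            have "c - e = u * (c - e) + v * (c - e)" unfolding v1 by (simp add: algebra_simps)
            also have "\<dots> \<le> u * x$l + v * y$l"
              using x y u v unfolding T_def by (intro add_mono mult_left_mono) auto
            finally show "c - e \<le> (u *\<^sub>R x + v *\<^sub>R y)$l" by simp
          qed
          then show "u *\<^sub>R x + v *\<^sub>R y \<in> T" unfolding T_def by blast
        qed
        have neS: "(\<chi> l. \<nu> l + Gv G p (return_pmf l) undefined) \<in> S" unfolding S_def by auto
        have neT: "(\<chi> l. c - e) \<in> T" unfolding T_def by simp
        have dis: "S \<inter> T = {}"
        proof (rule ccontr)
          assume "S \<inter> T \<noteq> {}"
          then obtain z \<sigma> where "\<forall>l. z$l \<le> \<nu> l + Gv G p (return_pmf l) \<sigma>" "\<forall>l. c - e \<le> z$l"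
            unfolding S_def T_def by blast
          then have "\<forall>l. c - e \<le> \<nu> l + Gv G p (return_pmf l) \<sigma>" by (meson order_trans)
          then show False using nc by blast
        qed
        obtain a b where a0: "a \<noteq> 0" and aS: "\<forall>x\<in>S. inner a x \<le> b" and aT: "\<forall>x\<in>T. b \<le> inner a x"
          using separating_hyperplane_sets[OF cS cT _ _ dis] neS neT by blast
        have inner_eq: "\<And>x. inner a x = (\<Sum>i\<in>UNIV. a$i * x$i)" by (simp add: inner_vec_def)
        have anonneg: "0 \<le> a$l" for l
        proof (rule ccontr)
          assume "\<not> 0 \<le> a$l"
          then have neg: "a$l < 0" by simp
          define t where "t = (\<bar>b\<bar> + \<bar>(c - e) * (\<Sum>i\<in>UNIV. a$i)\<bar> + 1) / (- a$l)"
          have tpos: "0 \<le> t" using neg unfolding t_def by (intro divide_nonneg_pos) auto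
          define x :: "real^'l" where "x = (\<chi> i. if i = l then c - e + t else c - e)"
          have "x \<in> T" unfolding T_def x_def using tpos by auto
          then have "b \<le> inner a x" using aT by auto
          also have "inner a x = (c - e) * (\<Sum>i\<in>UNIV. a$i) + t * a$l"
          proof -
            have "\<And>i. a$i * x$i = (c - e) * a$i + (if i = l then t * a$l else 0)"
              by (auto simp: x_def algebra_simps)
            then show ?thesis unfolding inner_eq by (simp add: sum.distrib sum_distrib_left)
          qed
          also have "t * a$l = - (\<bar>b\<bar> + \<bar>(c - e) * (\<Sum>i\<in>UNIV. a$i)\<bar> + 1)"
            using neg unfolding t_def by (simp add: field_simps)
          finally show False
            using abs_ge_self[of b] abs_ge_self[of "(c - e) * (\<Sum>i\<in>UNIV. a$i)"] by linarith
        qed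
        define s where "s = (\<Sum>i\<in>UNIV. a$i)"
        have spos: "0 < s"
        proof -
          obtain l where "a$l \<noteq> 0" using a0 by (metis vec_eq_iff zero_index)
          then have "0 < a$l" using anonneg[of l] by simp
          also have "a$l \<le> s" unfolding s_def by (rule member_le_sum) (auto intro: anonneg)
          finally show ?thesis .
        qed
        have wsum: "(\<Sum>l\<in>UNIV. a$l / s) = 1"
          using spos by (simp add: sum_divide_distrib[symmetric] s_def[symmetric])
        obtain y :: "'l pmf" where y: "\<And>l. pmf y l = a$l / s"
          using pmf_of_weights[of "\<lambda>l. a$l / s", OF _ wsum] anonneg spos by auto
        have bT: "b \<le> (c - e) * s"
        proof -
          have "b \<le> inner a (\<chi> l. c - e)" using aT neT by blast
          also have "\<dots> = (c - e) * s" unfolding inner_eq s_def by (simp add: sum_distrib_left mult.commute)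
          finally show ?thesis .
        qed
        have yb: "measure_pmf.expectation y \<nu> + Gv G p y \<sigma> \<le> c - e" for \<sigma>
        proof -
          have "(\<chi> l. \<nu> l + Gv G p (return_pmf l) \<sigma>) \<in> S" unfolding S_def by auto
          then have "inner a (\<chi> l. \<nu> l + Gv G p (return_pmf l) \<sigma>) \<le> b" using aS by blast
          then have "(\<Sum>l\<in>UNIV. a$l * (\<nu> l + Gv G p (return_pmf l) \<sigma>)) \<le> (c - e) * s"
            using bT unfolding inner_eq by simp
          then have "(\<Sum>l\<in>UNIV. a$l * (\<nu> l + Gv G p (return_pmf l) \<sigma>)) / s \<le> c - e"
            using spos by (simp add: pos_divide_le_eq)
          moreover have "(\<Sum>l\<in>UNIV. a$l * (\<nu> l + Gv G p (return_pmf l) \<sigma>)) / s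
              = measure_pmf.expectation y \<nu> + Gv G p y \<sigma>"
            unfolding E_sum Gv_lin[of p y] y
            by (simp add: sum_divide_distrib sum.distrib[symmetric] algebra_simps add_divide_distrib)
          ultimately show ?thesis by simp
        qed
        have "game_val G p y \<le> c - e - measure_pmf.expectation y \<nu>"
          unfolding game_val_def Gv_def[symmetric]
        proof (rule cSUP_least)
          fix \<sigma> show "Gv G p y \<sigma> \<le> c - e - measure_pmf.expectation y \<nu>" using yb[of \<sigma>] by linarith
        qed simp
        with c_le[of y] e show False by linarith
      qed
      then obtain \<sigma> where \<sigma>: "\<forall>l. c - e \<le> \<nu> l + Gv G p (return_pmf l) \<sigma>" by blast
      have "c - e \<le> Phi p \<nu> \<sigma>"
        unfolding Phi_def
      proof (rule cINF_greatest)
        fix z :: "'l pmf \<times> ('l,'a,'b) strat2"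
        obtain y \<tau> where z: "z = (y, \<tau>)" by fastforce
        have "c - e = (\<Sum>l\<in>UNIV. pmf y l * (c - e))"
          by (simp add: sum_distrib_right[symmetric] sum_pmf_UNIV)
        also have "\<dots> \<le> (\<Sum>l\<in>UNIV. pmf y l * (\<nu> l + Gv G p (return_pmf l) \<sigma>))"
          using \<sigma> by (intro sum_mono mult_left_mono) auto
        also have "\<dots> = measure_pmf.expectation y \<nu> + Gv G p y \<sigma>"
          unfolding E_sum Gv_lin[of p y] by (simp add: sum.distrib[symmetric] algebra_simps)
        also have "\<dots> \<le> measure_pmf.expectation y \<nu> + G p y \<sigma> \<tau>" using Gv_le by simp
        finally show "c - e \<le> (case z of (y, \<tau>) \<Rightarrow> measure_pmf.expectation y \<nu> + G p y \<sigma> \<tau>)"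
          using z by simp
      qed simp
      then show "(INF y. ?f y) \<le> dual_val2 G p \<nu> + e"
        using dual2_ge[of p \<nu> \<sigma>] unfolding c_def by linarith
    qed
  qed
qed


lemma W_concave:
  assumes u: "0 \<le> u" "u \<le> 1" and xm: "\<And>k. pmf xm k = u * pmf x1 k + (1 - u) * pmf x2 k"
  shows "u * game_val G x1 q + (1 - u) * game_val G x2 q \<le> game_val G xm q"
proof (rule field_le_epsilon)
  fix e :: real assume e: "0 < e"
  obtain \<sigma>1 where s1: "game_val G x1 q - e < Gv G x1 q \<sigma>1"
    using less_cSUP_iff[of UNIV "Gv G x1 q" "game_val G x1 q - e"] W_bdd[of x1 q] e
    unfolding game_val_def Gv_def[symmetric] by auto
  obtain \<sigma>2 where s2: "game_val G x2 q - e < Gv G x2 q \<sigma>2"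
    using less_cSUP_iff[of UNIV "Gv G x2 q" "game_val G x2 q - e"] W_bdd[of x2 q] e
    unfolding game_val_def Gv_def[symmetric] by auto
  define \<alpha> where "\<alpha> = (\<lambda>k. if pmf xm k = 0 then 1 else u * pmf x1 k / pmf xm k)"
  have t1: "0 \<le> u * pmf x1 k" "0 \<le> (1 - u) * pmf x2 k" for k using u by auto
  have a01: "0 \<le> \<alpha> k \<and> \<alpha> k \<le> 1" for k
    using t1[of k] xm[of k] unfolding \<alpha>_def by (auto simp: divide_le_eq)
  have a1: "pmf xm k * \<alpha> k = u * pmf x1 k" for k
  proof (cases "pmf xm k = 0")
    case True
    then have "u * pmf x1 k = 0" using t1[of k] xm[of k] by linarith
    then show ?thesis using True by simp
  next
    case False
    then show ?thesis unfolding \<alpha>_def by simp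
  qed
  have a2: "pmf xm k * (1 - \<alpha> k) = (1 - u) * pmf x2 k" for k
  proof -
    have "pmf xm k * (1 - \<alpha> k) = pmf xm k - pmf xm k * \<alpha> k" by (simp add: algebra_simps)
    then show ?thesis using a1[of k] xm[of k] by linarith
  qed
  obtain \<sigma> where \<sigma>: "\<forall>k l \<tau>. G (return_pmf k) (return_pmf l) \<sigma> \<tau> =
      \<alpha> k * G (return_pmf k) (return_pmf l) \<sigma>1 \<tau> + (1 - \<alpha> k) * G (return_pmf k) (return_pmf l) \<sigma>2 \<tau>"
    using G_mix[of \<alpha> \<sigma>1 \<sigma>2] a01 by blast
  have Gk: "G (return_pmf k) q \<sigma> \<tau> = \<alpha> k * G (return_pmf k) q \<sigma>1 \<tau> + (1 - \<alpha> k) * G (return_pmf k) q \<sigma>2 \<tau>" for k \<tau>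
    unfolding G_ret_p[of k q] \<sigma>[rule_format]
    by (simp add: sum_distrib_left sum.distrib sum_subtractf algebra_simps)
  have Geq: "G xm q \<sigma> \<tau> = u * G x1 q \<sigma>1 \<tau> + (1 - u) * G x2 q \<sigma>2 \<tau>" for \<tau>
  proof -
    have "G xm q \<sigma> \<tau> = (\<Sum>k\<in>UNIV. (pmf xm k * \<alpha> k) * G (return_pmf k) q \<sigma>1 \<tau> + (pmf xm k * (1 - \<alpha> k)) * G (return_pmf k) q \<sigma>2 \<tau>)"
      unfolding lin_p[of xm] Gk by (simp add: algebra_simps)
    also have "\<dots> = u * G x1 q \<sigma>1 \<tau> + (1 - u) * G x2 q \<sigma>2 \<tau>"
      unfolding a1 a2 lin_p[of x1] lin_p[of x2] by (simp add: sum.distrib sum_distrib_left mult.assoc)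
    finally show ?thesis .
  qed
  have "u * Gv G x1 q \<sigma>1 + (1 - u) * Gv G x2 q \<sigma>2 \<le> Gv G xm q \<sigma>"
    unfolding Gv_def[of G xm q \<sigma>]
  proof (rule cINF_greatest)
    fix \<tau>
    show "u * Gv G x1 q \<sigma>1 + (1 - u) * Gv G x2 q \<sigma>2 \<le> G xm q \<sigma> \<tau>"
      unfolding Geq using u by (intro add_mono mult_left_mono Gv_le) auto
  qed simp
  also have "\<dots> \<le> game_val G xm q" by (rule W_ge)
  finally have "u * Gv G x1 q \<sigma>1 + (1 - u) * Gv G x2 q \<sigma>2 \<le> game_val G xm q" .
  moreover have "u * (game_val G x1 q - e) + (1 - u) * (game_val G x2 q - e) \<le> u * Gv G x1 q \<sigma>1 + (1 - u) * Gv G x2 q \<sigma>2"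
    using s1 s2 u by (intro add_mono mult_left_mono) auto
  ultimately show "u * game_val G x1 q + (1 - u) * game_val G x2 q \<le> game_val G xm q + e"
    by (simp add: algebra_simps)
qed

lemma W_lip: "\<bar>game_val G x q - game_val G x' q\<bar> \<le> B * (\<Sum>k\<in>UNIV. \<bar>pmf x k - pmf x' k\<bar>)"
proof -
  have g: "\<bar>G x q \<sigma> \<tau> - G x' q \<sigma> \<tau>\<bar> \<le> B * (\<Sum>k\<in>UNIV. \<bar>pmf x k - pmf x' k\<bar>)" for \<sigma> \<tau>
  proof -
    have "G x q \<sigma> \<tau> - G x' q \<sigma> \<tau> = (\<Sum>k\<in>UNIV. (pmf x k - pmf x' k) * G (return_pmf k) q \<sigma> \<tau>)"
      unfolding lin_p[of x] lin_p[of x'] by (simp add: sum_subtractf algebra_simps)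
    also have "\<bar>\<dots>\<bar> \<le> (\<Sum>k\<in>UNIV. \<bar>(pmf x k - pmf x' k) * G (return_pmf k) q \<sigma> \<tau>\<bar>)" by (rule sum_abs)
    also have "\<dots> \<le> (\<Sum>k\<in>UNIV. \<bar>pmf x k - pmf x' k\<bar> * B)"
      by (rule sum_mono) (auto simp: abs_mult intro!: mult_left_mono G_bound)
    finally show ?thesis by (simp add: sum_distrib_left mult.commute)
  qed
  have "\<bar>Gv G x q \<sigma> - Gv G x' q \<sigma>\<bar> \<le> B * (\<Sum>k\<in>UNIV. \<bar>pmf x k - pmf x' k\<bar>)" for \<sigma>
    unfolding Gv_def by (rule inf_diff_le[OF g Gv_bdd Gv_bdd])
  then show ?thesis
    unfolding game_val_def Gv_def[symmetric] by (rule sup_diff_le[OF _ W_bdd W_bdd])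
qed

lemma dual1_ge: "measure_pmf.expectation x \<mu> + game_val G x q \<le> dual_val1 G \<mu> q"
proof -
  have "bdd_above (range (\<lambda>x. measure_pmf.expectation x \<mu> + game_val G x q))"
    unfolding bdd_above_def
  proof (intro exI ballI)
    fix z assume "z \<in> range (\<lambda>x. measure_pmf.expectation x \<mu> + game_val G x q)"
    then obtain x where z: "z = measure_pmf.expectation x \<mu> + game_val G x q" by auto
    show "z \<le> (\<Sum>l\<in>UNIV. \<bar>\<mu> l\<bar>) + B" using E_bound[of x \<mu>] W_abs[of x q] z by linarith
  qed
  then show ?thesis unfolding dual1_eq by (rule cSUP_upper[rotated]) simp
qed

definition vec_of :: "'k pmf \<Rightarrow> real^'k" where "vec_of x = (\<chi> k. pmf x k)"

lemma W_dual1: "game_val G p q = (INF \<mu>. dual_val1 G \<mu> q - measure_pmf.expectation p \<mu>)"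
proof -
  have bd: "bdd_below (range (\<lambda>\<mu>. dual_val1 G \<mu> q - measure_pmf.expectation p \<mu>))"
    using dual1_ge[of p _ q] by (auto simp: bdd_below_def intro!: exI[of _ "game_val G p q"] simp: algebra_simps)
  show ?thesis
  proof (rule antisym)
    show "game_val G p q \<le> (INF \<mu>. dual_val1 G \<mu> q - measure_pmf.expectation p \<mu>)"
      by (rule cINF_greatest) (use dual1_ge[of p _ q] in \<open>auto simp: algebra_simps\<close>)
    show "(INF \<mu>. dual_val1 G \<mu> q - measure_pmf.expectation p \<mu>) \<le> game_val G p q"
    proof (rule field_le_epsilon)
      fix e :: real assume e: "0 < e"
      let ?W = "\<lambda>x. game_val G x q"
      define \<delta> where "\<delta> = e / (2 * (B * real CARD('k) + 1))"
      have BC: "0 \<le> B * real CARD('k)" using B_nonneg by simp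
      have \<delta>pos: "0 < \<delta>" unfolding \<delta>_def using e BC by (intro divide_pos_pos) auto
      have \<delta>le: "B * real CARD('k) * \<delta> \<le> e / 2"
      proof -
        have "B * real CARD('k) * \<delta> = e / 2 * (B * real CARD('k) / (B * real CARD('k) + 1))"
          unfolding \<delta>_def using BC by (simp add: field_simps)
        also have "\<dots> \<le> e / 2 * 1" using BC e by (intro mult_left_mono) auto
        finally show ?thesis by simp
      qed
      define A :: "((real^'k) \<times> real) set" where "A = {(z, t). \<exists>x. z = vec_of x \<and> t \<le> ?W x}"
      define S :: "((real^'k) \<times> real) set" where "S = ball (vec_of p) \<delta> \<times> {?W p + e / 2 <..}"
      have cA: "convex A"
      proof (rule convexI)
        fix w1 w2 :: "(real^'k) \<times> real" and u v :: real
        assume w1: "w1 \<in> A" and w2: "w2 \<in> A" and u: "0 \<le> u" and v: "0 \<le> v" and uv: "u + v = 1"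
        have v1: "v = 1 - u" using uv by linarith
        obtain x1 where x1: "fst w1 = vec_of x1" "snd w1 \<le> ?W x1" using w1 unfolding A_def by auto
        obtain x2 where x2: "fst w2 = vec_of x2" "snd w2 \<le> ?W x2" using w2 unfolding A_def by auto
        obtain xm :: "'k pmf" where xm: "\<And>k. pmf xm k = u * pmf x1 k + (1 - u) * pmf x2 k"
        proof -
          have "\<exists>y::'k pmf. \<forall>k. pmf y k = u * pmf x1 k + (1 - u) * pmf x2 k"
            by (rule pmf_of_weights) (use u v1 v in \<open>auto simp: sum.distrib sum_distrib_left[symmetric] sum_pmf_UNIV\<close>)
          then show ?thesis using that by blast
        qed
        have "u *\<^sub>R fst w1 + v *\<^sub>R fst w2 = vec_of xm"
          unfolding x1 x2 vec_of_def v1 by (simp add: vec_eq_iff xm)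
        moreover have "u * snd w1 + v * snd w2 \<le> ?W xm"
        proof -
          have m1: "u * snd w1 \<le> u * ?W x1" by (rule mult_left_mono) (use x1 u in auto)
          have m2: "(1 - u) * snd w2 \<le> (1 - u) * ?W x2" by (rule mult_left_mono) (use x2 u v v1 in auto)
          have "u * snd w1 + v * snd w2 \<le> u * ?W x1 + (1 - u) * ?W x2"
            using m1 m2 v1 by simp
          also have "\<dots> \<le> ?W xm" using W_concave[of u xm x1 x2 q] u v v1 xm by auto
          finally show ?thesis .
        qed
        ultimately show "u *\<^sub>R w1 + v *\<^sub>R w2 \<in> A" unfolding A_def by (cases w1, cases w2) auto
      qed
      have cS: "convex S" unfolding S_def by (intro convex_Times convex_ball) auto
      have neA: "(vec_of p, ?W p) \<in> A" unfolding A_def by auto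
      have neS: "(vec_of p, ?W p + e) \<in> S" unfolding S_def using \<delta>pos e by auto
      have dis: "A \<inter> S = {}"
      proof (rule ccontr)
        assume "A \<inter> S \<noteq> {}"
        then obtain x t where t: "t \<le> ?W x" and d: "dist (vec_of p) (vec_of x) < \<delta>" and tt: "?W p + e / 2 < t"
          unfolding A_def S_def by auto
        have "\<And>k. \<bar>pmf x k - pmf p k\<bar> \<le> \<delta>"
        proof -
          fix k
          have "\<bar>(vec_of x - vec_of p)$k\<bar> \<le> norm (vec_of x - vec_of p)" by (rule component_le_norm_cart)
          also have "\<dots> < \<delta>" using d by (simp add: dist_norm norm_minus_commute)
          finally show "\<bar>pmf x k - pmf p k\<bar> \<le> \<delta>" by (simp add: vec_of_def)
        qed
        then have "(\<Sum>k\<in>UNIV. \<bar>pmf x k - pmf p k\<bar>) \<le> real CARD('k) * \<delta>"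
          using sum_mono[of UNIV "\<lambda>k. \<bar>pmf x k - pmf p k\<bar>" "\<lambda>_. \<delta>"] by simp
        then have "B * (\<Sum>k\<in>UNIV. \<bar>pmf x k - pmf p k\<bar>) \<le> B * (real CARD('k) * \<delta>)"
          using B_nonneg by (intro mult_left_mono) auto
        then have "?W x \<le> ?W p + e / 2" using W_lip[of x q p] \<delta>le by (simp add: mult.assoc abs_le_iff)
        then show False using t tt by linarith
      qed
      obtain w b where w0: "w \<noteq> 0" and wA: "\<forall>z\<in>A. inner w z \<le> b" and wS: "\<forall>z\<in>S. b \<le> inner w z"
        using separating_hyperplane_sets[OF cA cS _ _ dis] neA neS by blast
      define a where "a = fst w"
      define d where "d = snd w"
      have inn: "inner w (z, t) = inner a z + d * t" for z t
        unfolding a_def d_def by (cases w) simp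
      have inner_eq: "\<And>z. inner a z = (\<Sum>i\<in>UNIV. a$i * z$i)" by (simp add: inner_vec_def)
      have h1: "inner a (vec_of p) + d * ?W p \<le> b" using wA neA inn by metis
      have h2: "b \<le> inner a (vec_of p) + d * (?W p + e)" using wS neS inn by metis
      have d0: "0 \<le> d"
      proof -
        have "0 \<le> d * e" using h1 h2 by (simp add: algebra_simps)
        then show ?thesis using e by (simp add: zero_le_mult_iff)
      qed
      have dpos: "0 < d"
      proof (rule ccontr)
        assume "\<not> 0 < d"
        then have dz: "d = 0" using d0 by simp
        then have an: "a \<noteq> 0" using w0 unfolding a_def d_def by (cases w) (auto simp: zero_prod_def)
        then have na: "0 < norm a" by simp
        define z where "z = vec_of p - (\<delta> / (2 * norm a)) *\<^sub>R a"
        have "dist (vec_of p) z = \<delta> / 2" unfolding z_def dist_norm using na \<delta>pos by simp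
        then have "(z, ?W p + e) \<in> S" unfolding S_def using \<delta>pos e by auto
        then have "b \<le> inner a z" using wS inn dz by (metis add.right_neutral mult_zero_left)
        also have "inner a z = inner a (vec_of p) - \<delta> / 2 * norm a"
          unfolding z_def using na by (simp add: inner_diff_right power2_norm_eq_inner[symmetric] power2_eq_square)
        moreover have "0 < \<delta> * norm a" using na \<delta>pos by simp
        ultimately show False using h1 dz by simp
      qed
      define \<mu> where "\<mu> = (\<lambda>k. a$k / d)"
      have Ex: "measure_pmf.expectation x \<mu> = inner a (vec_of x) / d" for x
        unfolding E_sum inner_eq \<mu>_def vec_of_def by (simp add: sum_divide_distrib algebra_simps)
      have key: "measure_pmf.expectation x \<mu> + ?W x \<le> measure_pmf.expectation p \<mu> + ?W p + e" for x
      proof -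
        have "(vec_of x, ?W x) \<in> A" unfolding A_def by auto
        then have "inner a (vec_of x) + d * ?W x \<le> b" using wA inn by metis
        then have "inner a (vec_of x) + d * ?W x \<le> inner a (vec_of p) + d * (?W p + e)" using h2 by linarith
        then have "(inner a (vec_of x) + d * ?W x) / d \<le> (inner a (vec_of p) + d * (?W p + e)) / d"
          using dpos by (intro divide_right_mono) auto
        then show ?thesis unfolding Ex using dpos by (simp add: add_divide_distrib algebra_simps)
      qed
      have "dual_val1 G \<mu> q \<le> measure_pmf.expectation p \<mu> + ?W p + e"
        unfolding dual1_eq by (rule cSUP_least) (use key in auto)
      then have "dual_val1 G \<mu> q - measure_pmf.expectation p \<mu> \<le> ?W p + e" by linarith
      moreover have "(INF \<mu>. dual_val1 G \<mu> q - measure_pmf.expectation p \<mu>) \<le> dual_val1 G \<mu> q - measure_pmf.expectation p \<mu>"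
        by (rule cINF_lower[OF bd]) simp
      ultimately show "(INF \<mu>. dual_val1 G \<mu> q - measure_pmf.expectation p \<mu>) \<le> ?W p + e" by linarith
    qed
  qed
qed


lemma dual1_bdd: "bdd_above (range (\<lambda>x. measure_pmf.expectation x \<mu> + game_val G x q))"
  unfolding bdd_above_def
proof (intro exI ballI)
  fix z assume "z \<in> range (\<lambda>x. measure_pmf.expectation x \<mu> + game_val G x q)"
  then obtain x where z: "z = measure_pmf.expectation x \<mu> + game_val G x q" by auto
  show "z \<le> (\<Sum>l\<in>UNIV. \<bar>\<mu> l\<bar>) + B" using E_bound[of x \<mu>] W_abs[of x q] z by linarith
qed

lemma dual1_bdd2: "bdd_below (range (\<lambda>\<mu>. dual_val1 G \<mu> q - measure_pmf.expectation p \<mu>))"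
  using dual1_ge[of p _ q] by (auto simp: bdd_below_def intro!: exI[of _ "game_val G p q"] simp: algebra_simps)

lemma dual2_bdd2: "bdd_above (range (\<lambda>\<nu>. dual_val2 G p \<nu> - measure_pmf.expectation q \<nu>))"
  using dual2_le[of p _ q] by (auto simp: bdd_above_def intro!: exI[of _ "game_val G p q"] simp: algebra_simps)

lemma dual2_bdd3: "bdd_below (range (\<lambda>y. measure_pmf.expectation y \<nu> + game_val G p y))"
  unfolding bdd_below_def
proof (intro exI ballI)
  fix z assume "z \<in> range (\<lambda>y. measure_pmf.expectation y \<nu> + game_val G p y)"
  then obtain y where z: "z = measure_pmf.expectation y \<nu> + game_val G p y" by auto
  show "- (\<Sum>l\<in>UNIV. \<bar>\<nu> l\<bar>) - B \<le> z" using E_bound[of y \<nu>] W_abs[of p y] z by linarith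
qed

end


lemma abstract_main:
  fixes G1 G2 :: "'k::finite pmf \<Rightarrow> 'l::finite pmf \<Rightarrow> ('k,'a,'b) strat1 \<Rightarrow> ('l,'a,'b) strat2 \<Rightarrow> real"
  assumes g1: "good G1 B1" and g2: "good G2 B2"
  shows "(SUP (p, q). \<bar>game_val G1 p q - game_val G2 p q\<bar>)
           = (SUP (\<mu>, q). \<bar>dual_val1 G1 \<mu> q - dual_val1 G2 \<mu> q\<bar>)
       \<and> (SUP (\<mu>, q). \<bar>dual_val1 G1 \<mu> q - dual_val1 G2 \<mu> q\<bar>)
           = (SUP (p, \<nu>). \<bar>dual_val2 G1 p \<nu> - dual_val2 G2 p \<nu>\<bar>)"
proof -
  define D where "D = (SUP (p, q). \<bar>game_val G1 p q - game_val G2 p q\<bar>)"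
  define D1 where "D1 = (SUP (\<mu>, q). \<bar>dual_val1 G1 \<mu> q - dual_val1 G2 \<mu> q\<bar>)"
  define D2 where "D2 = (SUP (p, \<nu>). \<bar>dual_val2 G1 p \<nu> - dual_val2 G2 p \<nu>\<bar>)"
  have bD: "bdd_above (range (\<lambda>(p, q). \<bar>game_val G1 p q - game_val G2 p q\<bar>))"
    unfolding bdd_above_def
  proof (intro exI ballI)
    fix z assume "z \<in> range (\<lambda>(p, q). \<bar>game_val G1 p q - game_val G2 p q\<bar>)"
    then obtain p q where z: "z = \<bar>game_val G1 p q - game_val G2 p q\<bar>" by auto
    show "z \<le> B1 + B2" using W_abs[OF g1, of p q] W_abs[OF g2, of p q] z by linarith
  qed
  have Dle: "\<bar>game_val G1 p q - game_val G2 p q\<bar> \<le> D" for p q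
    unfolding D_def using cSUP_upper[OF _ bD, of "(p, q)"] by simp
  have d1le: "\<bar>dual_val1 G1 \<mu> q - dual_val1 G2 \<mu> q\<bar> \<le> D" for \<mu> q
    unfolding dual1_eq[OF g1] dual1_eq[OF g2]
    by (rule sup_diff_le[OF _ dual1_bdd[OF g1] dual1_bdd[OF g2]]) (use Dle in simp)
  have bD1: "bdd_above (range (\<lambda>(\<mu>, q). \<bar>dual_val1 G1 \<mu> q - dual_val1 G2 \<mu> q\<bar>))"
    using d1le by (auto simp: bdd_above_def intro!: exI[of _ D])
  have D1le: "\<bar>dual_val1 G1 \<mu> q - dual_val1 G2 \<mu> q\<bar> \<le> D1" for \<mu> q
    unfolding D1_def using cSUP_upper[OF _ bD1, of "(\<mu>, q)"] by simp
  have d2le: "\<bar>dual_val2 G1 p \<nu> - dual_val2 G2 p \<nu>\<bar> \<le> D" for p \<nu>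
    unfolding dual2_eq[OF g1] dual2_eq[OF g2]
    by (rule inf_diff_le[OF _ dual2_bdd3[OF g1] dual2_bdd3[OF g2]]) (use Dle in simp)
  have bD2: "bdd_above (range (\<lambda>(p, \<nu>). \<bar>dual_val2 G1 p \<nu> - dual_val2 G2 p \<nu>\<bar>))"
    using d2le by (auto simp: bdd_above_def intro!: exI[of _ D])
  have D2le: "\<bar>dual_val2 G1 p \<nu> - dual_val2 G2 p \<nu>\<bar> \<le> D2" for p \<nu>
    unfolding D2_def using cSUP_upper[OF _ bD2, of "(p, \<nu>)"] by simp
  have "D1 \<le> D" unfolding D1_def by (rule cSUP_least) (use d1le in auto)
  moreover have "D \<le> D1" unfolding D_def
  proof (rule cSUP_least)
    fix z :: "'k pmf \<times> 'l pmf"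
    obtain p q where z: "z = (p, q)" by fastforce
    have "\<bar>game_val G1 p q - game_val G2 p q\<bar> \<le> D1"
      apply (subst W_dual1[OF g1], subst W_dual1[OF g2])
      by (rule inf_diff_le[OF _ dual1_bdd2[OF g1] dual1_bdd2[OF g2]]) (use D1le in simp)
    then show "(case z of (p, q) \<Rightarrow> \<bar>game_val G1 p q - game_val G2 p q\<bar>) \<le> D1" using z by simp
  qed simp
  moreover have "D2 \<le> D" unfolding D2_def by (rule cSUP_least) (use d2le in auto)
  moreover have "D \<le> D2" unfolding D_def
  proof (rule cSUP_least)
    fix z :: "'k pmf \<times> 'l pmf"
    obtain p q where z: "z = (p, q)" by fastforce
    have "\<bar>game_val G1 p q - game_val G2 p q\<bar> \<le> D2"
      apply (subst W_dual2[OF g1], subst W_dual2[OF g2])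
      by (rule sup_diff_le[OF _ dual2_bdd2[OF g1] dual2_bdd2[OF g2]]) (use D2le in simp)
    then show "(case z of (p, q) \<Rightarrow> \<bar>game_val G1 p q - game_val G2 p q\<bar>) \<le> D2" using z by simp
  qed simp
  ultimately show ?thesis unfolding D_def[symmetric] D1_def[symmetric] D2_def[symmetric] by linarith
qed

theorem lemma4:
  fixes M :: "'k::finite \<Rightarrow> 'l::finite \<Rightarrow> 'a::finite \<Rightarrow> 'b::finite \<Rightarrow> real"
    and lam :: real and T :: nat
  assumes "0 < lam" and "lam < 1" and "1 \<le> T"
  shows "(SUP (p, q). \<bar>game_val (disc_pay M lam) p q - game_val (trunc_pay M lam T) p q\<bar>)
           = (SUP (\<mu>, q). \<bar>dual_val1 (disc_pay M lam) \<mu> q - dual_val1 (trunc_pay M lam T) \<mu> q\<bar>)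
       \<and> (SUP (\<mu>, q). \<bar>dual_val1 (disc_pay M lam) \<mu> q - dual_val1 (trunc_pay M lam T) \<mu> q\<bar>)
           = (SUP (p, \<nu>). \<bar>dual_val2 (disc_pay M lam) p \<nu> - dual_val2 (trunc_pay M lam T) p \<nu>\<bar>)"
  by (rule abstract_main[OF good_disc[OF assms(1,2)] good_trunc[OF assms(1,2)]])

end
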